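(* Let $\beta,\delta\in(0,1)$, $K>0$, $T>0$, and consider the controlled system $$f'=\tfrac12 fm\beta L-\delta f-\eta_1(t)f,\qquad m'=\tfrac12 fm\beta L-\delta m+\eta_2(t)m,\qquad L=1-\frac{f+m}{K},$$ with given initial conditions. The admissible set is $U_1=\{(\eta_1,\eta_2)$ measurable, $0\le\eta_1\le1$, $0\le\eta_2<\delta\}$ and the objective is $J_1=\int_0^T\big(-(f+m)-\tfrac12(\eta_1^2+\eta_2^2)\big)dt$. An optimal control $(\eta_1^*,\eta_2^* )\in U_1$ maximizing $J_1$ is characterized by $$\eta_1^*(t)=\min(1,\max(0,-f\lambda_1)),\qquad \eta_2^*(t)=\min(1,\max(0,m\lambda_2)).$$ Here $(f,m)$ is the corresponding state and $(\lambda_1,\lambda_2)$ solves $$\lambda_1'=1-\lambda_1\Big[\tfrac{m\beta}{2}L-\tfrac{fm\beta}{2K}-\delta-\eta_1\Big]-\lambda_2\Big[\tfrac{m\beta}{2}L-\tfrac{fm\beta}{2K}\Big],$$ $$\lambda_2'=1-\lambda_1\Big[\tfrac{f\beta}{2}L-\tfrac{fm\beta}{2K}\Big]-\lambda_2\Big[\tfrac{f\beta}{2}L-\tfrac{fm\beta}{2K}-\delta+\eta_2\Big],$$ with $\lambda_1(T)=\lambda_2(T)=0$.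
   Context: $f,m$ are female and male densities, $\eta_1$ is the female harvesting rate and $\eta_2$ the male stocking rate. The characterization is the necessary condition from Pontryagin's maximum principle with Hamiltonian $H_1=-(f+m)-\tfrac12(\eta_1^2+\eta_2^2)+\lambda_1f'+\lambda_2m'$. *)

theory Defs
  imports "HOL-Analysis.Analysis"
begin

definition Lfac :: "real \<Rightarrow> real \<Rightarrow> real \<Rightarrow> real" where
  "Lfac K x y = 1 - (x + y) / K"

definition admissible1 :: "real \<Rightarrow> real \<Rightarrow> (real \<Rightarrow> real) \<Rightarrow> (real \<Rightarrow> real) \<Rightarrow> bool" where
  "admissible1 \<delta> T \<eta>1 \<eta>2 \<longleftrightarrow>
     \<eta>1 \<in> borel_measurable (lebesgue_on {0..T}) \<and>
     \<eta>2 \<in> borel_measurable (lebesgue_on {0..T}) \<and>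
     (\<forall>t\<in>{0..T}. 0 \<le> \<eta>1 t \<and> \<eta>1 t \<le> 1 \<and> 0 \<le> \<eta>2 t \<and> \<eta>2 t < \<delta>)"

text \<open>(f,m) is the state corresponding to the controls (eta1,eta2) with initial
  data (f0,m0): a (Caratheodory) solution of the state system on [0,T],
  written in integral form.\<close>
definition is_state1 ::
  "real \<Rightarrow> real \<Rightarrow> real \<Rightarrow> real \<Rightarrow> real \<Rightarrow> real \<Rightarrow> (real \<Rightarrow> real) \<Rightarrow> (real \<Rightarrow> real)
   \<Rightarrow> (real \<Rightarrow> real) \<Rightarrow> (real \<Rightarrow> real) \<Rightarrow> bool" where
  "is_state1 \<beta> \<delta> K T f0 m0 \<eta>1 \<eta>2 f m \<longleftrightarrow>
     f 0 = f0 \<and> m 0 = m0 \<and>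
     (\<forall>t\<in>{0..T}.
        ((\<lambda>s. 1/2 * f s * m s * \<beta> * Lfac K (f s) (m s) - \<delta> * f s - \<eta>1 s * f s)
            has_integral (f t - f0)) {0..t} \<and>
        ((\<lambda>s. 1/2 * f s * m s * \<beta> * Lfac K (f s) (m s) - \<delta> * m s + \<eta>2 s * m s)
            has_integral (m t - m0)) {0..t})"

definition J1 :: "real \<Rightarrow> (real \<Rightarrow> real) \<Rightarrow> (real \<Rightarrow> real) \<Rightarrow> (real \<Rightarrow> real) \<Rightarrow> (real \<Rightarrow> real) \<Rightarrow> real" where
  "J1 T \<eta>1 \<eta>2 f m = integral {0..T} (\<lambda>t. - (f t + m t) - 1/2 * ((\<eta>1 t)\<^sup>2 + (\<eta>2 t)\<^sup>2))"

definition is_adjoint1 ::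
  "real \<Rightarrow> real \<Rightarrow> real \<Rightarrow> real \<Rightarrow> (real \<Rightarrow> real) \<Rightarrow> (real \<Rightarrow> real)
   \<Rightarrow> (real \<Rightarrow> real) \<Rightarrow> (real \<Rightarrow> real) \<Rightarrow> (real \<Rightarrow> real) \<Rightarrow> (real \<Rightarrow> real) \<Rightarrow> bool" where
  "is_adjoint1 \<beta> \<delta> K T \<eta>1 \<eta>2 f m p1 p2 \<longleftrightarrow>
     p1 T = 0 \<and> p2 T = 0 \<and>
     (\<forall>t\<in>{0..T}.
        ((\<lambda>s. 1 - p1 s * (m s * \<beta> / 2 * Lfac K (f s) (m s) - f s * m s * \<beta> / (2 * K) - \<delta> - \<eta>1 s)
                 - p2 s * (m s * \<beta> / 2 * Lfac K (f s) (m s) - f s * m s * \<beta> / (2 * K)))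
            has_integral (p1 T - p1 t)) {t..T} \<and>
        ((\<lambda>s. 1 - p1 s * (f s * \<beta> / 2 * Lfac K (f s) (m s) - f s * m s * \<beta> / (2 * K))
                 - p2 s * (f s * \<beta> / 2 * Lfac K (f s) (m s) - f s * m s * \<beta> / (2 * K) - \<delta> + \<eta>2 s))
            has_integral (p2 T - p2 t)) {t..T})"

end

theory Submission
  imports Defs
begin

lemma reflect_has_integral:
  fixes g :: "real \<Rightarrow> real"
  assumes "(g has_integral I) {a..b}"
  shows "((\<lambda>s. g (c - s)) has_integral I) {c-b..c-a}"
proof -
  have "((\<lambda>x. g (-x)) has_integral I) (cbox (-b) (-a))" using assms by (simp add: cbox_interval)
  from has_integral_affinity'[OF this, of 1 "-c"]
  show ?thesis by (simp add: cbox_interval algebra_simps)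
qed

lemma has_integral_pow0:
  fixes t :: real
  assumes "0 \<le> t"
  shows "((\<lambda>s. s^k) has_integral (t^(Suc k) / real (Suc k))) {0..t}"
proof -
  have "((\<lambda>s. s^k) has_integral ((\<lambda>s. s^(Suc k) / real (Suc k)) t - (\<lambda>s. s^(Suc k) / real (Suc k)) 0)) {0..t}"
  proof (rule fundamental_theorem_of_calculus[OF assms, where f="\<lambda>s. s^(Suc k) / real (Suc k)" and f'="\<lambda>s. s^k"])
    fix x assume "x \<in> {0..t}"
    have "((\<lambda>s. s^(Suc k) / real (Suc k)) has_real_derivative x^k) (at x within {0..t})"
      by (rule derivative_eq_intros refl | simp)+
    then show "((\<lambda>s. s^(Suc k) / real (Suc k)) has_vector_derivative x^k) (at x within {0..t})"
      by (simp add: has_real_derivative_iff_has_vector_derivative)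
  qed
  then show ?thesis by simp
qed

lemma picard2:
  fixes a11 a12 a21 a22 b1 b2 :: "real \<Rightarrow> real" and T M :: real
  assumes T: "0 \<le> T" and Mpos: "0 < M"
  and bnd: "\<And>s. s \<in> {0..T} \<Longrightarrow> \<bar>a11 s\<bar> \<le> M \<and> \<bar>a12 s\<bar> \<le> M \<and> \<bar>a21 s\<bar> \<le> M \<and> \<bar>a22 s\<bar> \<le> M \<and> \<bar>b1 s\<bar> \<le> M \<and> \<bar>b2 s\<bar> \<le> M"
  and int: "\<And>x y. continuous_on {0..T} x \<Longrightarrow> continuous_on {0..T} y \<Longrightarrow>
      (\<lambda>s. a11 s * x s + a12 s * y s + b1 s) integrable_on {0..T} \<and>
      (\<lambda>s. a21 s * x s + a22 s * y s + b2 s) integrable_on {0..T}"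
  shows "\<exists>x y. continuous_on {0..T} x \<and> continuous_on {0..T} y \<and>
      (\<forall>t\<in>{0..T}. ((\<lambda>s. a11 s * x s + a12 s * y s + b1 s) has_integral x t) {0..t} \<and>
                  ((\<lambda>s. a21 s * x s + a22 s * y s + b2 s) has_integral y t) {0..t})"
proof -
  define G1 where "G1 = (\<lambda>(x::real\<Rightarrow>real) (y::real\<Rightarrow>real) s. a11 s * x s + a12 s * y s + b1 s)"
  define G2 where "G2 = (\<lambda>(x::real\<Rightarrow>real) (y::real\<Rightarrow>real) s. a21 s * x s + a22 s * y s + b2 s)"
  define P where "P = rec_nat ((\<lambda>_::real. 0::real), (\<lambda>_::real. 0::real))
     (\<lambda>n p. ((\<lambda>t. integral {0..t} (G1 (fst p) (snd p))), (\<lambda>t. integral {0..t} (G2 (fst p) (snd p)))))"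
  define X where "X n = fst (P n)" for n
  define Y where "Y n = snd (P n)" for n
  have X0: "X 0 = (\<lambda>_. 0)" and Y0: "Y 0 = (\<lambda>_. 0)" by (simp_all add: X_def Y_def P_def)
  have XS: "X (Suc n) = (\<lambda>t. integral {0..t} (G1 (X n) (Y n)))"
   and YS: "Y (Suc n) = (\<lambda>t. integral {0..t} (G2 (X n) (Y n)))" for n
    by (simp_all add: X_def Y_def P_def)
  have intG: "G1 x y integrable_on {0..t} \<and> G2 x y integrable_on {0..t}"
    if "continuous_on {0..T} x" "continuous_on {0..T} y" "t \<in> {0..T}" for x y t
  proof -
    have "G1 x y integrable_on {0..T} \<and> G2 x y integrable_on {0..T}"
      using int[OF that(1,2)] by (simp add: G1_def G2_def)
    then show ?thesis using integrable_on_subinterval[of _ "{0..T}" 0 t] that(3) by auto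
  qed
  have cont: "continuous_on {0..T} (X n) \<and> continuous_on {0..T} (Y n)" for n
  proof (induction n)
    case 0 then show ?case by (simp add: X0 Y0)
  next
    case (Suc n)
    have "G1 (X n) (Y n) integrable_on {0..T} \<and> G2 (X n) (Y n) integrable_on {0..T}"
      using int[of "X n" "Y n"] Suc by (simp add: G1_def G2_def)
    then show ?case unfolding XS YS by (auto intro: indefinite_integral_continuous_1)
  qed
  have bound: "\<bar>X (Suc n) t - X n t\<bar> + \<bar>Y (Suc n) t - Y n t\<bar> \<le> (2*M*t)^(Suc n) / fact (Suc n)"
    if "t \<in> {0..T}" for n t
    using that
  proof (induction n arbitrary: t)
    case 0
    have i1: "G1 (X 0) (Y 0) integrable_on {0..t}" "G2 (X 0) (Y 0) integrable_on {0..t}"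
      using intG[OF cont[of 0, THEN conjunct1] cont[of 0, THEN conjunct2] 0] by auto
    have "norm (integral {0..t} (G1 (X 0) (Y 0))) \<le> integral {0..t} (\<lambda>_. M)"
      by (rule integral_norm_bound_integral[OF i1(1)]) (use 0 bnd in \<open>auto simp: G1_def X0 Y0\<close>)
    moreover have "norm (integral {0..t} (G2 (X 0) (Y 0))) \<le> integral {0..t} (\<lambda>_. M)"
      by (rule integral_norm_bound_integral[OF i1(2)]) (use 0 bnd in \<open>auto simp: G2_def X0 Y0\<close>)
    ultimately show ?case using 0 by (simp add: XS YS X0 Y0 ac_simps)
  next
    case (Suc n)
    let ?c = "M * (2*M)^(Suc n) / fact (Suc n)"
    have t: "t \<in> {0..T}" by fact
    have c1: "continuous_on {0..T} (X (Suc n))" "continuous_on {0..T} (Y (Suc n))"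
      "continuous_on {0..T} (X n)" "continuous_on {0..T} (Y n)" using cont by auto
    have i1: "G1 (X (Suc n)) (Y (Suc n)) integrable_on {0..t}" "G2 (X (Suc n)) (Y (Suc n)) integrable_on {0..t}"
      using intG[OF c1(1,2) t] by auto
    have i2: "G1 (X n) (Y n) integrable_on {0..t}" "G2 (X n) (Y n) integrable_on {0..t}"
      using intG[OF c1(3,4) t] by auto
    have ip: "(\<lambda>s. ?c * s^(Suc n)) integrable_on {0..t}"
      using has_integral_mult_right[OF has_integral_pow0[of t "Suc n"], of ?c] t by (auto intro: has_integral_integrable)
    have ipv: "integral {0..t} (\<lambda>s. ?c * s^(Suc n)) = ?c * (t^(Suc (Suc n)) / real (Suc (Suc n)))"
      using t by (intro integral_unique has_integral_mult_right has_integral_pow0) auto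
    have pw: "\<bar>a * (X (Suc n) s - X n s) + b * (Y (Suc n) s - Y n s)\<bar> \<le> ?c * s^(Suc n)"
      if "s \<in> {0..t}" "\<bar>a\<bar> \<le> M" "\<bar>b\<bar> \<le> M" for s a b
    proof -
      have s: "s \<in> {0..T}" using that t by auto
      have "\<bar>a * (X (Suc n) s - X n s) + b * (Y (Suc n) s - Y n s)\<bar> \<le> M * \<bar>X (Suc n) s - X n s\<bar> + M * \<bar>Y (Suc n) s - Y n s\<bar>"
      proof -
        have "\<bar>a * (X (Suc n) s - X n s) + b * (Y (Suc n) s - Y n s)\<bar> \<le> \<bar>a\<bar>*\<bar>X (Suc n) s - X n s\<bar> + \<bar>b\<bar>*\<bar>Y (Suc n) s - Y n s\<bar>" by (metis abs_mult abs_triangle_ineq)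
        also have "\<dots> \<le> M*\<bar>X (Suc n) s - X n s\<bar> + M*\<bar>Y (Suc n) s - Y n s\<bar>" using that by (intro add_mono mult_right_mono) auto
        finally show ?thesis .
      qed
      also have "\<dots> \<le> M * ((2*M* s)^(Suc n) / fact (Suc n))"
        using mult_left_mono[OF Suc.IH[OF s], of M] Mpos by (simp add: distrib_left[symmetric])
      also have "\<dots> = ?c * s^(Suc n)" by (simp add: power_mult_distrib)
      finally show ?thesis .
    qed
    have d1: "X (Suc (Suc n)) t - X (Suc n) t = integral {0..t} (\<lambda>s. G1 (X (Suc n)) (Y (Suc n)) s - G1 (X n) (Y n) s)"
      using i1 i2 by (simp add: XS[of "Suc n"] XS[of n] integral_diff)
    have d2: "Y (Suc (Suc n)) t - Y (Suc n) t = integral {0..t} (\<lambda>s. G2 (X (Suc n)) (Y (Suc n)) s - G2 (X n) (Y n) s)"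
      using i1 i2 by (simp add: YS[of "Suc n"] YS[of n] integral_diff)
    have e1: "\<bar>X (Suc (Suc n)) t - X (Suc n) t\<bar> \<le> integral {0..t} (\<lambda>s. ?c * s^(Suc n))"
      unfolding d1 real_norm_def[symmetric]
    proof (rule integral_norm_bound_integral[OF integrable_diff[OF i1(1) i2(1)] ip])
      fix s assume s: "s \<in> {0..t}"
      then have "s \<in> {0..T}" using t by auto
      then show "norm (G1 (X (Suc n)) (Y (Suc n)) s - G1 (X n) (Y n) s) \<le> ?c * s^(Suc n)"
        using pw[OF s, of "a11 s" "a12 s"] bnd by (simp add: G1_def algebra_simps)
    qed
    have e2: "\<bar>Y (Suc (Suc n)) t - Y (Suc n) t\<bar> \<le> integral {0..t} (\<lambda>s. ?c * s^(Suc n))"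
      unfolding d2 real_norm_def[symmetric]
    proof (rule integral_norm_bound_integral[OF integrable_diff[OF i1(2) i2(2)] ip])
      fix s assume s: "s \<in> {0..t}"
      then have "s \<in> {0..T}" using t by auto
      then show "norm (G2 (X (Suc n)) (Y (Suc n)) s - G2 (X n) (Y n) s) \<le> ?c * s^(Suc n)"
        using pw[OF s, of "a21 s" "a22 s"] bnd by (simp add: G2_def algebra_simps)
    qed
    have "2 * (?c * (t^(Suc (Suc n)) / real (Suc (Suc n)))) = (2*M*t)^(Suc (Suc n)) / fact (Suc (Suc n))"
    proof -
      have f: "(fact (Suc (Suc n))::real) = real (Suc (Suc n)) * fact (Suc n)" by (simp only: fact_Suc of_nat_mult)
      have p: "(2*M*t)^(Suc(Suc n)) = 2*M*(2*M)^(Suc n) * t^(Suc (Suc n))" by (simp only: power_mult_distrib power_Suc) (simp add: ac_simps)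
      show ?thesis unfolding f p by (simp add: divide_simps del: of_nat_Suc fact_Suc)
    qed
    then show ?case using e1 e2 ipv by linarith
  qed
  define Mb where "Mb i = (2*M*T)^(Suc i) / fact (Suc i)" for i
  have summ: "summable Mb"
  proof -
    have "summable (\<lambda>n. inverse (fact n) * (2*M*T)^n)" by (rule summable_exp)
    then have "summable (\<lambda>n. (2*M*T)^n / fact n)" by (simp add: divide_inverse mult.commute)
    then show ?thesis unfolding Mb_def by (subst summable_Suc_iff)
  qed
  have Db: "\<bar>X (Suc i) t - X i t\<bar> \<le> Mb i \<and> \<bar>Y (Suc i) t - Y i t\<bar> \<le> Mb i" if "t \<in> {0..T}" for i t
  proof -
    have "(2*M*t)^(Suc i) / fact (Suc i) \<le> Mb i"
      unfolding Mb_def using that Mpos by (intro divide_right_mono power_mono mult_left_mono) auto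
    then show ?thesis using bound[OF that, of i] by auto
  qed
  have teleX: "X n = (\<lambda>t. \<Sum>i<n. X (Suc i) t - X i t)" for n
    by (rule ext, subst sum_lessThan_telescope) (simp add: X0)
  have teleY: "Y n = (\<lambda>t. \<Sum>i<n. Y (Suc i) t - Y i t)" for n
    by (rule ext, subst sum_lessThan_telescope) (simp add: Y0)
  define Xs where "Xs t = (\<Sum>i. X (Suc i) t - X i t)" for t
  define Ys where "Ys t = (\<Sum>i. Y (Suc i) t - Y i t)" for t
  have ulX: "uniform_limit {0..T} X Xs sequentially"
  proof -
    have "uniform_limit {0..T} (\<lambda>n t. \<Sum>i<n. X (Suc i) t - X i t) (\<lambda>t. \<Sum>i. X (Suc i) t - X i t) sequentially"
      by (rule Weierstrass_m_test[OF _ summ]) (use Db in auto)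
    then show ?thesis unfolding Xs_def by (simp add: teleX[symmetric])
  qed
  have ulY: "uniform_limit {0..T} Y Ys sequentially"
  proof -
    have "uniform_limit {0..T} (\<lambda>n t. \<Sum>i<n. Y (Suc i) t - Y i t) (\<lambda>t. \<Sum>i. Y (Suc i) t - Y i t) sequentially"
      by (rule Weierstrass_m_test[OF _ summ]) (use Db in auto)
    then show ?thesis unfolding Ys_def by (simp add: teleY[symmetric])
  qed
  have cXs: "continuous_on {0..T} Xs"
    by (rule uniform_limit_theorem[OF _ ulX]) (use cont in \<open>auto intro: always_eventually\<close>)
  have cYs: "continuous_on {0..T} Ys"
    by (rule uniform_limit_theorem[OF _ ulY]) (use cont in \<open>auto intro: always_eventually\<close>)
  have limint: "(\<lambda>n. integral {0..t} (\<lambda>s. c s * X n s + d s * Y n s + e s)) \<longlonglongrightarrow> integral {0..t} (\<lambda>s. c s * Xs s + d s * Ys s + e s)"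
    if t: "t \<in> {0..T}" and cd: "\<And>s. s \<in> {0..T} \<Longrightarrow> \<bar>c s\<bar> \<le> M \<and> \<bar>d s\<bar> \<le> M"
      and ii: "\<And>n. (\<lambda>s. c s * X n s + d s * Y n s + e s) integrable_on {0..t}"
      and ii2: "(\<lambda>s. c s * Xs s + d s * Ys s + e s) integrable_on {0..t}"
    for t c d e
  proof (rule tendstoI)
    fix r :: real assume r: "r > 0"
    define ee where "ee = r / (2*M*T + 1)"
    have MT: "0 \<le> 2*M*T" using Mpos T by simp
    have ee: "ee > 0" unfolding ee_def using r MT by (intro divide_pos_pos) auto
    have "\<forall>\<^sub>F n in sequentially. \<forall>x\<in>{0..T}. dist (X n x) (Xs x) < ee"
      using ulX ee unfolding uniform_limit_iff by auto
    moreover have "\<forall>\<^sub>F n in sequentially. \<forall>x\<in>{0..T}. dist (Y n x) (Ys x) < ee"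
      using ulY ee unfolding uniform_limit_iff by auto
    ultimately show "\<forall>\<^sub>F n in sequentially. dist (integral {0..t} (\<lambda>s. c s * X n s + d s * Y n s + e s)) (integral {0..t} (\<lambda>s. c s * Xs s + d s * Ys s + e s)) < r"
    proof eventually_elim
      case (elim n)
      have "norm (integral {0..t} (\<lambda>s. (c s * X n s + d s * Y n s + e s) - (c s * Xs s + d s * Ys s + e s))) \<le> integral {0..t} (\<lambda>_. 2*M*ee)"
      proof (rule integral_norm_bound_integral[OF integrable_diff[OF ii ii2]])
        show "(\<lambda>_. 2*M*ee) integrable_on {0..t}" by (rule integrable_const_ivl)
        fix s assume s: "s \<in> {0..t}"
        then have s': "s \<in> {0..T}" using t by auto
        have "\<bar>c s * (X n s - Xs s) + d s * (Y n s - Ys s)\<bar> \<le> \<bar>c s\<bar>*\<bar>X n s - Xs s\<bar> + \<bar>d s\<bar>*\<bar>Y n s - Ys s\<bar>" by (metis abs_mult abs_triangle_ineq)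
        also have "\<dots> \<le> M*ee + M*ee"
          using elim s' cd[OF s'] by (intro add_mono mult_mono) (auto simp: dist_real_def less_imp_le)
        finally show "norm ((c s * X n s + d s * Y n s + e s) - (c s * Xs s + d s * Ys s + e s)) \<le> 2*M*ee"
          by (simp add: algebra_simps)
      qed
      also have "\<dots> = 2*M*ee*t" using t by simp
      also have "\<dots> \<le> 2*M*ee*T" using t Mpos ee by (intro mult_left_mono) auto
      also have "\<dots> < r" unfolding ee_def using r MT by (simp add: field_simps)
      finally show ?case using integral_diff[OF ii ii2] by (simp add: dist_real_def)
    qed
  qed
  show ?thesis
  proof (intro exI conjI ballI)
    show "continuous_on {0..T} Xs" "continuous_on {0..T} Ys" by fact+
    fix t assume t: "t \<in> {0..T}"
    have iX: "G1 Xs Ys integrable_on {0..t}" "G2 Xs Ys integrable_on {0..t}" using intG[OF cXs cYs t] by auto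
    have pX: "(\<lambda>n. X n t) \<longlonglongrightarrow> Xs t" using ulX t by (rule tendsto_uniform_limitI)
    have pY: "(\<lambda>n. Y n t) \<longlonglongrightarrow> Ys t" using ulY t by (rule tendsto_uniform_limitI)
    have l1: "(\<lambda>n. X (Suc n) t) \<longlonglongrightarrow> integral {0..t} (G1 Xs Ys)"
      unfolding XS G1_def
      by (rule limint[OF t]) (use bnd intG[OF cont[THEN conjunct1] cont[THEN conjunct2] t] iX in \<open>auto simp: G1_def\<close>)
    have l2: "(\<lambda>n. Y (Suc n) t) \<longlonglongrightarrow> integral {0..t} (G2 Xs Ys)"
      unfolding YS G2_def
      by (rule limint[OF t]) (use bnd intG[OF cont[THEN conjunct1] cont[THEN conjunct2] t] iX in \<open>auto simp: G2_def\<close>)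
    have "integral {0..t} (G1 Xs Ys) = Xs t" using LIMSEQ_unique[OF l1 LIMSEQ_Suc[OF pX]] .
    then show "((\<lambda>s. a11 s * Xs s + a12 s * Ys s + b1 s) has_integral Xs t) {0..t}"
      using iX(1) unfolding G1_def by (metis integrable_integral)
    have "integral {0..t} (G2 Xs Ys) = Ys t" using LIMSEQ_unique[OF l2 LIMSEQ_Suc[OF pY]] .
    then show "((\<lambda>s. a21 s * Xs s + a22 s * Ys s + b2 s) has_integral Ys t) {0..t}"
      using iX(2) unfolding G2_def by (metis integrable_integral)
  qed
qed

lemma has_integral_point0: "(f has_integral y) {a..a::real} \<Longrightarrow> y = (0::real)"
proof -
  assume h: "(f has_integral y) {a..a}"
  have "{a..a} = {a}" by simp
  with h have "(f has_integral y) {a}" by simp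
  then show ?thesis using has_integral_refl(2)[of f a] by (rule has_integral_unique)
qed

lemma backward2:
  fixes c11 c12 c21 c22 :: "real \<Rightarrow> real" and T M :: real
  assumes T: "0 \<le> T" and Mpos: "0 < M"
  and bnd: "\<And>s. s \<in> {0..T} \<Longrightarrow> \<bar>c11 s\<bar> \<le> M \<and> \<bar>c12 s\<bar> \<le> M \<and> \<bar>c21 s\<bar> \<le> M \<and> \<bar>c22 s\<bar> \<le> M"
  and int: "\<And>x y. continuous_on {0..T} x \<Longrightarrow> continuous_on {0..T} y \<Longrightarrow>
      (\<lambda>s. c11 s * x s + c21 s * y s) integrable_on {0..T} \<and>
      (\<lambda>s. c12 s * x s + c22 s * y s) integrable_on {0..T}"
  shows "\<exists>p1 p2. continuous_on {0..T} p1 \<and> continuous_on {0..T} p2 \<and> p1 T = 0 \<and> p2 T = 0 \<and>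
      (\<forall>t\<in>{0..T}. ((\<lambda>s. 1 - p1 s * c11 s - p2 s * c21 s) has_integral (p1 T - p1 t)) {t..T} \<and>
                  ((\<lambda>s. 1 - p1 s * c12 s - p2 s * c22 s) has_integral (p2 T - p2 t)) {t..T})"
proof -
  define M' where "M' = max M 1"
  have M': "0 < M'" "M \<le> M'" "1 \<le> M'" unfolding M'_def by auto
  have refl_int: "(\<lambda>s. g (T - s)) integrable_on {0..T}" if "g integrable_on {0..T}" for g :: "real \<Rightarrow> real"
    using reflect_has_integral[of g "integral {0..T} g" 0 T T] that by (auto simp: has_integral_integral)
  have refl_cont: "continuous_on {0..T} (\<lambda>s. g (T - s))" if "continuous_on {0..T} g" for g :: "real \<Rightarrow> real"
    by (rule continuous_on_compose2[OF that]) (auto intro!: continuous_intros)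
  obtain x y where cx: "continuous_on {0..T} x" and cy: "continuous_on {0..T} y" and
    eq: "\<forall>t\<in>{0..T}. ((\<lambda>s. c11 (T - s) * x s + c21 (T - s) * y s + (-1)) has_integral x t) {0..t} \<and>
                  ((\<lambda>s. c12 (T - s) * x s + c22 (T - s) * y s + (-1)) has_integral y t) {0..t}"
  proof (atomize_elim, rule picard2[OF T M'(1)])
    fix s assume "s \<in> {0..T}"
    then have "T - s \<in> {0..T}" by auto
    then show "\<bar>c11 (T - s)\<bar> \<le> M' \<and> \<bar>c21 (T - s)\<bar> \<le> M' \<and> \<bar>c12 (T - s)\<bar> \<le> M' \<and> \<bar>c22 (T - s)\<bar> \<le> M' \<and> \<bar>-1::real\<bar> \<le> M' \<and> \<bar>-1::real\<bar> \<le> M'"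
      using bnd M' by fastforce
  next
    fix x y :: "real \<Rightarrow> real" assume "continuous_on {0..T} x" "continuous_on {0..T} y"
    then have cc: "continuous_on {0..T} (\<lambda>s. x (T - s))" "continuous_on {0..T} (\<lambda>s. y (T - s))"
      by (auto intro: refl_cont)
    have "(\<lambda>s. c11 (T - s) * x (T - (T - s)) + c21 (T - s) * y (T - (T - s))) integrable_on {0..T}"
      using refl_int[OF int[OF cc, THEN conjunct1]] by simp
    then have i1: "(\<lambda>s. c11 (T - s) * x s + c21 (T - s) * y s) integrable_on {0..T}" by simp
    have "(\<lambda>s. c12 (T - s) * x (T - (T - s)) + c22 (T - s) * y (T - (T - s))) integrable_on {0..T}"
      using refl_int[OF int[OF cc, THEN conjunct2]] by simp
    then have i2: "(\<lambda>s. c12 (T - s) * x s + c22 (T - s) * y s) integrable_on {0..T}" by simp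
    show "(\<lambda>s. c11 (T - s) * x s + c21 (T - s) * y s + (-1)) integrable_on {0..T} \<and>
          (\<lambda>s. c12 (T - s) * x s + c22 (T - s) * y s + (-1)) integrable_on {0..T}"
      using integrable_add[OF i1 integrable_const_ivl[of "-1::real" 0 T]]
            integrable_add[OF i2 integrable_const_ivl[of "-1::real" 0 T]] by auto
  qed
  define p1 where "p1 t = x (T - t)" for t
  define p2 where "p2 t = y (T - t)" for t
  have x0: "x 0 = 0" and y0: "y 0 = 0" using eq T by (auto dest: has_integral_point0)
  show ?thesis
  proof (intro exI conjI ballI)
    show "continuous_on {0..T} p1" "continuous_on {0..T} p2" unfolding p1_def p2_def
      using cx cy by (auto intro: refl_cont)
    show "p1 T = 0" "p2 T = 0" using x0 y0 by (auto simp: p1_def p2_def)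
    fix t assume t: "t \<in> {0..T}"
    then have t': "T - t \<in> {0..T}" by auto
    have "((\<lambda>s. c11 (T - s) * x s + c21 (T - s) * y s + (-1)) has_integral x (T - t)) {0..T - t}"
      using eq t' by blast
    from has_integral_neg[OF this]
    have "((\<lambda>s. - (c11 (T - s) * x s + c21 (T - s) * y s + (-1))) has_integral - x (T - t)) {0..T - t}" by simp
    from reflect_has_integral[OF this, of T]
    show "((\<lambda>s. 1 - p1 s * c11 s - p2 s * c21 s) has_integral (p1 T - p1 t)) {t..T}"
      using x0 by (simp add: p1_def p2_def algebra_simps)
    have "((\<lambda>s. c12 (T - s) * x s + c22 (T - s) * y s + (-1)) has_integral y (T - t)) {0..T - t}"
      using eq t' by blast
    from has_integral_neg[OF this]
    have "((\<lambda>s. - (c12 (T - s) * x s + c22 (T - s) * y s + (-1))) has_integral - y (T - t)) {0..T - t}" by simp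
    from reflect_has_integral[OF this, of T]
    show "((\<lambda>s. 1 - p1 s * c12 s - p2 s * c22 s) has_integral (p2 T - p2 t)) {t..T}"
      using y0 by (simp add: p1_def p2_def algebra_simps)
  qed
qed

lemma gronwall_back:
  fixes d :: "real \<Rightarrow> real" and a b C :: real
  assumes ab: "a \<le> b" and C: "0 \<le> C" and cd: "continuous_on {a..b} d"
    and nn: "\<And>s. s \<in> {a..b} \<Longrightarrow> 0 \<le> d s"
    and le: "\<And>s. s \<in> {a..b} \<Longrightarrow> d s \<le> C * integral {s..b} d"
  shows "d a = 0"
proof -
  obtain Mx where Mx: "\<And>s. s \<in> {a..b} \<Longrightarrow> d s \<le> Mx"
    using compact_attains_sup[OF compact_continuous_image[OF cd]] ab by fastforce
  have Mx0: "0 \<le> Mx" using Mx[of a] nn[of a] ab by auto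
  have pw: "((\<lambda>u. (b - u)^n) has_integral ((b - s)^(Suc n) / real (Suc n))) {s..b}" if "s \<le> b" for s n
    using reflect_has_integral[OF has_integral_pow0[of "b - s" n], of b] that by simp
  have ind: "d s \<le> Mx * C^n * (b - s)^n / fact n" if "s \<in> {a..b}" for s n
    using that
  proof (induction n arbitrary: s)
    case 0 then show ?case using Mx by simp
  next
    case (Suc n)
    have sb: "{s..b} \<subseteq> {a..b}" using Suc.prems by auto
    have i1: "d integrable_on {s..b}"
      using integrable_continuous_interval continuous_on_subset[OF cd sb] by blast
    define K where "K = Mx * C^n / fact n"
    have i2: "((\<lambda>u. K * (b - u)^n) has_integral (K * ((b - s)^(Suc n) / real (Suc n)))) {s..b}"
      by (rule has_integral_mult_right[OF pw]) (use Suc.prems in auto)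
    have "integral {s..b} d \<le> integral {s..b} (\<lambda>u. K * (b - u)^n)"
    proof (rule integral_le[OF i1 has_integral_integrable[OF i2]])
      fix u assume "u \<in> {s..b}"
      then have "u \<in> {a..b}" using sb by auto
      then show "d u \<le> K * (b - u)^n" using Suc.IH unfolding K_def by (simp add: field_simps)
    qed
    also have "\<dots> = K * ((b - s)^(Suc n) / real (Suc n))" using i2 by (rule integral_unique)
    finally have "C * integral {s..b} d \<le> C * (K * ((b - s)^(Suc n) / real (Suc n)))"
      using C by (rule mult_left_mono)
    also have "\<dots> = Mx * C^(Suc n) * (b - s)^(Suc n) / fact (Suc n)"
    proof -
      have f: "(fact (Suc n)::real) = real (Suc n) * fact n" by (simp only: fact_Suc of_nat_mult)
      show ?thesis unfolding K_def f by (simp add: divide_simps del: of_nat_Suc fact_Suc)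
    qed
    finally show ?case using le[OF Suc.prems] by linarith
  qed
  have "(\<lambda>n. (C * (b - a))^n / fact n) \<longlonglongrightarrow> 0"
  proof -
    have "summable (\<lambda>n. inverse (fact n) * (C * (b - a))^n)" by (rule summable_exp)
    then have "summable (\<lambda>n. (C * (b - a))^n / fact n)" by (simp add: divide_inverse mult.commute)
    then show ?thesis by (rule summable_LIMSEQ_zero)
  qed
  then have lim: "(\<lambda>n. Mx * ((C * (b - a))^n / fact n)) \<longlonglongrightarrow> Mx * 0" by (rule tendsto_mult_left)
  have bd: "d a \<le> Mx * ((C * (b - a))^n / fact n)" for n
    using ind[of a n] ab by (simp add: power_mult_distrib)
  have "d a \<le> Mx * 0" by (rule LIMSEQ_le_const[OF lim]) (use bd in auto)
  then have "d a \<le> 0" by simp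
  then show ?thesis using nn[of a] ab by auto
qed

lemma positivity:
  fixes x c :: "real \<Rightarrow> real" and T C t :: real
  assumes T: "0 \<le> T" and x0: "0 < x 0" and cx: "continuous_on {0..T} x"
  and eq: "\<And>t. t \<in> {0..T} \<Longrightarrow> ((\<lambda>s. x s * c s) has_integral (x t - x 0)) {0..t}"
  and bc: "\<And>s. s \<in> {0..T} \<Longrightarrow> \<bar>c s\<bar> \<le> C"
  and t: "t \<in> {0..T}"
  shows "0 < x t"
proof (rule ccontr)
  assume nt: "\<not> 0 < x t"
  define S where "S = {0..T} \<inter> x -` {..0}"
  have tS: "t \<in> S" using t nt by (auto simp: S_def)
  have clS: "closed S" unfolding S_def by (rule continuous_closed_preimage[OF cx]) auto
  have bS: "bdd_below S" unfolding S_def by (rule bdd_belowI[of _ 0]) auto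
  define ts where "ts = Inf S"
  have tsS: "ts \<in> S" unfolding ts_def using closed_contains_Inf[OF _ bS clS] tS by auto
  have low: "ts \<le> s" if "s \<in> S" for s unfolding ts_def using that bS by (rule cInf_lower)
  have ts: "0 \<le> ts" "ts \<le> T" "x ts \<le> 0" using tsS by (auto simp: S_def)
  have C: "0 \<le> C" using bc[of 0] T by auto
  have sub: "{0..ts} \<subseteq> {0..T}" using ts by auto
  have cx': "continuous_on {0..ts} x" using continuous_on_subset[OF cx sub] .
  obtain z where z: "z \<in> {0..ts}" "x z = 0"
    using IVT2'[of x ts 0 0, OF ts(3) less_imp_le[OF x0] ts(1) cx'] by auto
  have "z \<in> S" using z sub by (auto simp: S_def)
  then have "z = ts" using low[of z] z by auto
  then have xts: "x ts = 0" using z by simp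
  have nn: "0 \<le> x s" if "s \<in> {0..ts}" for s
  proof (rule ccontr)
    assume "\<not> 0 \<le> x s"
    then have "s \<in> S" using that sub by (auto simp: S_def)
    then have "s = ts" using low[of s] that by auto
    then show False using xts \<open>\<not> 0 \<le> x s\<close> by simp
  qed
  have le: "x s \<le> C * integral {s..ts} x" if s: "s \<in> {0..ts}" for s
  proof -
    have ss: "s \<in> {0..T}" using s sub by auto
    have hts: "((\<lambda>u. x u * c u) has_integral (x ts - x 0)) {0..ts}" using eq ts by auto
    have hs: "((\<lambda>u. x u * c u) has_integral (x s - x 0)) {0..s}" using eq ss by auto
    have ist: "(\<lambda>u. x u * c u) integrable_on {s..ts}"
      using integrable_on_subinterval[OF has_integral_integrable[OF hts], of s ts] s by auto
    have "((\<lambda>u. x u * c u) has_integral ((x s - x 0) + integral {s..ts} (\<lambda>u. x u * c u))) {0..ts}"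
      using has_integral_combine[OF _ _ hs integrable_integral[OF ist]] s by auto
    then have "x s - x 0 + integral {s..ts} (\<lambda>u. x u * c u) = x ts - x 0"
      using hts by (rule has_integral_unique)
    then have J: "integral {s..ts} (\<lambda>u. x u * c u) = - x s"
      using xts by linarith
    have cxs: "continuous_on {s..ts} x" by (rule continuous_on_subset[OF cx']) (use s in auto)
    have ix: "(\<lambda>u. C * x u) integrable_on {s..ts}"
      by (intro integrable_continuous_interval continuous_intros cxs)
    have "norm (integral {s..ts} (\<lambda>u. x u * c u)) \<le> integral {s..ts} (\<lambda>u. C * x u)"
    proof (rule integral_norm_bound_integral[OF ist ix])
      fix u assume u: "u \<in> {s..ts}"
      then have u': "u \<in> {0..ts}" "u \<in> {0..T}" using s sub by auto
      have "\<bar>x u * c u\<bar> = x u * \<bar>c u\<bar>" using nn[OF u'(1)] by (simp add: abs_mult)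
      also have "\<dots> \<le> x u * C" using nn[OF u'(1)] bc[OF u'(2)] by (rule mult_left_mono[rotated])
      finally show "norm (x u * c u) \<le> C * x u" by (simp add: mult.commute)
    qed
    then show ?thesis using J by (simp add: integral_mult_right)
  qed
  have "x 0 = 0"
    by (rule gronwall_back[OF ts(1) C cx' nn le])
  then show False using x0 by simp
qed

lemma set_integrable_bounded_Icc:
  fixes g :: "real \<Rightarrow> real"
  assumes g: "g \<in> borel_measurable borel" and bd: "\<And>x. \<bar>g x\<bar> \<le> M"
  shows "set_integrable lborel {u..v} g"
  unfolding set_integrable_def
proof (rule Bochner_Integration.integrable_bound)
  have "emeasure lborel {u..v} < top" using emeasure_lborel_cbox_finite[of u v] by (simp add: cbox_interval)
  then show "integrable lborel (\<lambda>x. M * indicator {u..v} x :: real)"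
    by (intro integrable_mult_right integrable_real_indicator) auto
  show "(\<lambda>x. indicator {u..v} x *\<^sub>R g x) \<in> borel_measurable lborel" using g by measurable
  show "AE x in lborel. norm (indicator {u..v} x *\<^sub>R g x) \<le> norm (M * indicator {u..v} x :: real)"
  proof (intro AE_I2)
    fix x
    have M0: "0 \<le> M" using bd[of x] by auto
    show "norm (indicator {u..v} x *\<^sub>R g x) \<le> norm (M * indicator {u..v} x :: real)"
      using bd[of x] M0 by (auto simp: indicator_def)
  qed
qed

lemma fubini_borel:
  fixes a b :: "real \<Rightarrow> real" and T M :: real
  assumes a[measurable]: "a \<in> borel_measurable borel" and b[measurable]: "b \<in> borel_measurable borel"
    and bd: "\<And>x. \<bar>a x\<bar> \<le> M \<and> \<bar>b x\<bar> \<le> M" and T: "0 \<le> T"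
  shows "integral {0..T} (\<lambda>t. a t * integral {0..t} b) = integral {0..T} (\<lambda>s. b s * integral {s..T} a)"
proof -
  define f where "f x y = (if 0 \<le> y \<and> y \<le> x \<and> x \<le> T then a x * b y else 0)" for x y :: real
  have M: "0 \<le> M" using bd[of 0] by auto
  have fm: "(\<lambda>(x, y). f x y) \<in> borel_measurable (lborel \<Otimes>\<^sub>M lborel)"
    unfolding f_def by measurable
  have fint: "integrable (lborel \<Otimes>\<^sub>M lborel) (\<lambda>(x, y). f x y)"
  proof (rule Bochner_Integration.integrable_bound[OF _ fm])
    show "integrable (lborel \<Otimes>\<^sub>M lborel) (\<lambda>p. M * M * indicator (cbox (0,0) (T,T)) p :: real)"
      unfolding lborel_prod
      by (intro integrable_mult_right integrable_real_indicator) (use emeasure_lborel_cbox_finite[of "(0::real,0::real)" "(T,T)"] in auto)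
    show "AE p in lborel \<Otimes>\<^sub>M lborel. norm ((\<lambda>(x, y). f x y) p) \<le> norm (M * M * indicator (cbox (0,0) (T,T)) p :: real)"
    proof (intro AE_I2)
      fix p :: "real \<times> real"
      obtain x y where p: "p = (x, y)" by (cases p)
      have "\<bar>f x y\<bar> \<le> M * M * indicator (cbox (0,0) (T,T)) (x, y)"
      proof (cases "0 \<le> y \<and> y \<le> x \<and> x \<le> T")
        case True
        then have "(x, y) \<in> cbox (0,0) (T,T)" by (auto simp: cbox_Pair_iff)
        moreover have "\<bar>a x * b y\<bar> \<le> M * M" using bd[of x] bd[of y] M by (simp add: abs_mult mult_mono)
        ultimately show ?thesis using True by (simp add: f_def)
      next
        case False
        then show ?thesis using M by (auto simp: f_def)
      qed
      then show "norm ((\<lambda>(x, y). f x y) p) \<le> norm (M * M * indicator (cbox (0,0) (T,T)) p :: real)"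
        using M by (simp add: p)
    qed
  qed
  have inner1: "(LINT y|lborel. f x y) = indicator {0..T} x * (a x * integral {0..x} b)" for x
  proof (cases "0 \<le> x \<and> x \<le> T")
    case True
    have "(LINT y|lborel. f x y) = (LINT y|lborel. a x * (indicator {0..x} y *\<^sub>R b y))"
      using True by (intro Bochner_Integration.integral_cong) (auto simp: f_def indicator_def)
    also have "\<dots> = a x * (LINT y:{0..x}|lborel. b y)" by (simp add: set_lebesgue_integral_def)
    also have "\<dots> = a x * integral {0..x} b"
      using set_borel_integral_eq_integral(2)[OF set_integrable_bounded_Icc[OF b, of M]] bd by auto
    finally show ?thesis using True by simp
  next
    case False
    then have "f x = (\<lambda>y. 0)" by (auto simp: f_def)
    then show ?thesis using False by simp
  qed
  have inner2: "(LINT x|lborel. f x y) = indicator {0..T} y * (b y * integral {y..T} a)" for y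
  proof (cases "0 \<le> y \<and> y \<le> T")
    case True
    have "(LINT x|lborel. f x y) = (LINT x|lborel. b y * (indicator {y..T} x *\<^sub>R a x))"
      using True by (intro Bochner_Integration.integral_cong) (auto simp: f_def indicator_def)
    also have "\<dots> = b y * (LINT x:{y..T}|lborel. a x)" by (simp add: set_lebesgue_integral_def)
    also have "\<dots> = b y * integral {y..T} a"
      using set_borel_integral_eq_integral(2)[OF set_integrable_bounded_Icc[OF a, of M]] bd by auto
    finally show ?thesis using True by simp
  next
    case False
    then have "(\<lambda>x. f x y) = (\<lambda>x. 0)" by (auto simp: f_def)
    then show ?thesis using False by simp
  qed
  have i1: "set_integrable lborel {0..T} (\<lambda>x. a x * integral {0..x} b)"
    using lborel_pair.integrable_fst[OF fint] unfolding set_integrable_def inner1 by simp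
  have i2: "set_integrable lborel {0..T} (\<lambda>y. b y * integral {y..T} a)"
    using lborel_pair.integrable_snd[OF fint] unfolding set_integrable_def inner2 by simp
  have "integral {0..T} (\<lambda>t. a t * integral {0..t} b) = (LINT x:{0..T}|lborel. a x * integral {0..x} b)"
    using set_borel_integral_eq_integral(2)[OF i1] by simp
  also have "\<dots> = (LINT x|lborel. LINT y|lborel. f x y)"
    unfolding inner1 set_lebesgue_integral_def by simp
  also have "\<dots> = (LINT y|lborel. LINT x|lborel. f x y)"
    using lborel_pair.Fubini_integral[OF fint] by simp
  also have "\<dots> = (LINT y:{0..T}|lborel. b y * integral {y..T} a)"
    unfolding inner2 set_lebesgue_integral_def by simp
  also have "\<dots> = integral {0..T} (\<lambda>s. b s * integral {s..T} a)"
    using set_borel_integral_eq_integral(2)[OF i2] by simp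
  finally show ?thesis .
qed

lemma lebesgue_to_borel:
  fixes a :: "real \<Rightarrow> real"
  assumes a: "a \<in> borel_measurable (lebesgue_on {0..T})" and bd: "\<And>x. x \<in> {0..T} \<Longrightarrow> \<bar>a x\<bar> \<le> M" and M: "0 \<le> M"
  shows "\<exists>a'. a' \<in> borel_measurable borel \<and> (\<forall>x. \<bar>a' x\<bar> \<le> M) \<and> negligible {x \<in> {0..T}. a x \<noteq> a' x}"
proof -
  define A where "A x = (if x \<in> {0..T} then a x else 0)" for x
  have "A \<in> borel_measurable lebesgue" using borel_measurable_if_I[OF a] unfolding A_def[abs_def] by simp
  then obtain g where g: "g \<in> borel_measurable lborel" and ae: "AE x in lborel. A x = g x"
    using completion_ex_borel_measurable_real by blast
  define a' where "a' x = max (-M) (min M (g x))" for x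
  have a'm: "a' \<in> borel_measurable borel" using g unfolding a'_def by simp
  have a'b: "\<forall>x. \<bar>a' x\<bar> \<le> M" using M by (auto simp: a'_def)
  have Ab: "\<bar>A x\<bar> \<le> M" for x using bd M by (auto simp: A_def)
  have ae2: "AE x in lborel. A x = a' x"
    using ae
  proof eventually_elim
    case (elim x) then show ?case using Ab[of x] by (auto simp: a'_def)
  qed
  then obtain N where N: "{x \<in> space lborel. \<not> A x = a' x} \<subseteq> N" "emeasure lborel N = 0" "N \<in> sets lborel"
    by (rule AE_E)
  have "N \<in> null_sets lborel" using N by auto
  then have "N \<in> null_sets lebesgue" by (rule null_sets_completionI)
  then have "negligible N" by (simp add: negligible_iff_null_sets)
  moreover have "{x \<in> {0..T}. a x \<noteq> a' x} \<subseteq> N" using N(1) by (auto simp: A_def)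
  ultimately have "negligible {x \<in> {0..T}. a x \<noteq> a' x}" by (rule negligible_subset)
  then show ?thesis using a'm a'b by blast
qed

lemma fubini_leb:
  fixes a b :: "real \<Rightarrow> real" and T M :: real
  assumes a: "a \<in> borel_measurable (lebesgue_on {0..T})" and b: "b \<in> borel_measurable (lebesgue_on {0..T})"
    and bd: "\<And>x. x \<in> {0..T} \<Longrightarrow> \<bar>a x\<bar> \<le> M \<and> \<bar>b x\<bar> \<le> M" and T: "0 \<le> T"
  shows "integral {0..T} (\<lambda>t. a t * integral {0..t} b) = integral {0..T} (\<lambda>s. b s * integral {s..T} a)"
proof -
  have M: "0 \<le> M" using bd[of 0] T by auto
  obtain a' where a': "a' \<in> borel_measurable borel" "\<forall>x. \<bar>a' x\<bar> \<le> M" and na: "negligible {x \<in> {0..T}. a x \<noteq> a' x}"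
    using lebesgue_to_borel[OF a _ M] bd by blast
  obtain b' where b': "b' \<in> borel_measurable borel" "\<forall>x. \<bar>b' x\<bar> \<le> M" and nb: "negligible {x \<in> {0..T}. b x \<noteq> b' x}"
    using lebesgue_to_borel[OF b _ M] bd by blast
  have ib: "integral {0..t} b = integral {0..t} b'" if "t \<in> {0..T}" for t
    by (rule integral_spike[OF nb]) (use that in auto)
  have ia: "integral {s..T} a = integral {s..T} a'" if "s \<in> {0..T}" for s
    by (rule integral_spike[OF na]) (use that in auto)
  have "integral {0..T} (\<lambda>t. a t * integral {0..t} b) = integral {0..T} (\<lambda>t. a' t * integral {0..t} b')"
    by (rule integral_spike[OF na]) (auto simp: ib)
  also have "\<dots> = integral {0..T} (\<lambda>s. b' s * integral {s..T} a')"
    by (rule fubini_borel[OF a'(1) b'(1) _ T]) (use a'(2) b'(2) in auto)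
  also have "\<dots> = integral {0..T} (\<lambda>s. b s * integral {s..T} a)"
    by (rule integral_spike[OF nb]) (auto simp: ia)
  finally show ?thesis .
qed

lemma cbound: "continuous_on {0..T} q \<Longrightarrow> \<exists>B. \<forall>s\<in>{0..T}. \<bar>q s\<bar> \<le> (B::real)"
  for q :: "real \<Rightarrow> real"
proof -
  assume "continuous_on {0..T} q"
  then have "bounded (q ` {0..T})" by (intro compact_imp_bounded compact_continuous_image) auto
  then show ?thesis unfolding bounded_iff by auto
qed

lemma bm_integrable:
  fixes q :: "real \<Rightarrow> real"
  assumes "q \<in> borel_measurable (lebesgue_on {a..b})" "\<And>s. s \<in> {a..b} \<Longrightarrow> \<bar>q s\<bar> \<le> B"
  shows "q integrable_on {a..b}"
  by (rule measurable_bounded_by_integrable_imp_integrable_real[OF assms(1) integrable_const_ivl[of B a b] assms(2)]) auto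

lemma lin_integrable:
  fixes c d e x y :: "real \<Rightarrow> real"
  assumes c: "c \<in> borel_measurable (lebesgue_on {0..T})" and d: "d \<in> borel_measurable (lebesgue_on {0..T})"
    and e: "e \<in> borel_measurable (lebesgue_on {0..T})"
    and bd: "\<And>s. s \<in> {0..T} \<Longrightarrow> \<bar>c s\<bar> \<le> M \<and> \<bar>d s\<bar> \<le> M \<and> \<bar>e s\<bar> \<le> M"
    and cx: "continuous_on {0..T} x" and cy: "continuous_on {0..T} y"
  shows "(\<lambda>s. c s * x s + d s * y s + e s) integrable_on {0..T}"
proof -
  obtain Bx where Bx: "\<forall>s\<in>{0..T}. \<bar>x s\<bar> \<le> Bx" using cbound[OF cx] by blast
  obtain By where By: "\<forall>s\<in>{0..T}. \<bar>y s\<bar> \<le> By" using cbound[OF cy] by blast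
  have mx: "x \<in> borel_measurable (lebesgue_on {0..T})" by (rule continuous_imp_measurable_on_sets_lebesgue[OF cx]) auto
  have my: "y \<in> borel_measurable (lebesgue_on {0..T})" by (rule continuous_imp_measurable_on_sets_lebesgue[OF cy]) auto
  show ?thesis
  proof (rule bm_integrable)
    show "(\<lambda>s. c s * x s + d s * y s + e s) \<in> borel_measurable (lebesgue_on {0..T})"
      using c d e mx my by measurable
    fix s assume s: "s \<in> {0..T}"
    have "\<bar>c s * x s + d s * y s + e s\<bar> \<le> \<bar>c s\<bar> * \<bar>x s\<bar> + \<bar>d s\<bar> * \<bar>y s\<bar> + \<bar>e s\<bar>"
      using abs_triangle_ineq[of "c s * x s + d s * y s" "e s"] abs_triangle_ineq[of "c s * x s" "d s * y s"]
      by (simp add: abs_mult)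
    also have "\<dots> \<le> M * Bx + M * By + M"
      using bd[OF s] Bx By s by (intro add_mono mult_mono) auto
    finally show "\<bar>c s * x s + d s * y s + e s\<bar> \<le> M * Bx + M * By + M" .
  qed
qed

locale oc =
  fixes \<beta> \<delta> K T f0 m0 :: real and \<eta>1 \<eta>2 f m :: "real \<Rightarrow> real"
  assumes bpos: "0 < \<beta>" "\<beta> < 1" and dpos: "0 < \<delta>" "\<delta> < 1" and Kpos: "0 < K" and Tpos: "0 < T"
    and f0pos: "0 < f0" and m0pos: "0 < m0"
    and adm: "admissible1 \<delta> T \<eta>1 \<eta>2"
    and st: "is_state1 \<beta> \<delta> K T f0 m0 \<eta>1 \<eta>2 f m"
    and opt: "\<forall>u1 u2 g h. admissible1 \<delta> T u1 u2 \<and> is_state1 \<beta> \<delta> K T f0 m0 u1 u2 g h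
                 \<longrightarrow> J1 T u1 u2 g h \<le> J1 T \<eta>1 \<eta>2 f m"
begin

definition "FF s = 1/2 * f s * m s * \<beta> * Lfac K (f s) (m s) - \<delta> * f s - \<eta>1 s * f s"
definition "MM s = 1/2 * f s * m s * \<beta> * Lfac K (f s) (m s) - \<delta> * m s + \<eta>2 s * m s"

lemma f_0: "f 0 = f0" and m_0: "m 0 = m0" using st by (auto simp: is_state1_def)

lemma FF_int: "t \<in> {0..T} \<Longrightarrow> (FF has_integral (f t - f0)) {0..t}"
  using st unfolding is_state1_def FF_def[abs_def] by blast
lemma MM_int: "t \<in> {0..T} \<Longrightarrow> (MM has_integral (m t - m0)) {0..t}"
  using st unfolding is_state1_def MM_def[abs_def] by blast

lemma eta: "t \<in> {0..T} \<Longrightarrow> 0 \<le> \<eta>1 t \<and> \<eta>1 t \<le> 1 \<and> 0 \<le> \<eta>2 t \<and> \<eta>2 t < \<delta>"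
  using adm by (auto simp: admissible1_def)
lemma meas_eta1[measurable]: "\<eta>1 \<in> borel_measurable (lebesgue_on {0..T})"
  using adm by (auto simp: admissible1_def)
lemma meas_eta2[measurable]: "\<eta>2 \<in> borel_measurable (lebesgue_on {0..T})"
  using adm by (auto simp: admissible1_def)

lemma cont_f: "continuous_on {0..T} f"
proof -
  have "FF integrable_on {0..T}" using FF_int[of T] Tpos by auto
  then have "continuous_on {0..T} (\<lambda>t. f0 + integral {0..t} FF)"
    by (intro continuous_intros indefinite_integral_continuous_1)
  then show ?thesis
  proof (rule continuous_on_eq)
    fix x assume "x \<in> {0..T}"
    then have "integral {0..x} FF = f x - f0" by (rule integral_unique[OF FF_int])
    then show "f0 + integral {0..x} FF = f x" by simp
  qed
qed
lemma cont_m: "continuous_on {0..T} m"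
proof -
  have "MM integrable_on {0..T}" using MM_int[of T] Tpos by auto
  then have "continuous_on {0..T} (\<lambda>t. m0 + integral {0..t} MM)"
    by (intro continuous_intros indefinite_integral_continuous_1)
  then show ?thesis
  proof (rule continuous_on_eq)
    fix x assume "x \<in> {0..T}"
    then have "integral {0..x} MM = m x - m0" by (rule integral_unique[OF MM_int])
    then show "m0 + integral {0..x} MM = m x" by simp
  qed
qed

lemma meas_f[measurable]: "f \<in> borel_measurable (lebesgue_on {0..T})"
  by (rule continuous_imp_measurable_on_sets_lebesgue[OF cont_f]) auto
lemma meas_m[measurable]: "m \<in> borel_measurable (lebesgue_on {0..T})"
  by (rule continuous_imp_measurable_on_sets_lebesgue[OF cont_m]) auto

lemma f_pos: "t \<in> {0..T} \<Longrightarrow> 0 < f t"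
proof -
  assume t: "t \<in> {0..T}"
  define c where "c s = 1/2 * m s * \<beta> * Lfac K (f s) (m s) - \<delta> - \<eta>1 s" for s
  have "continuous_on {0..T} (\<lambda>s. 1/2 * m s * \<beta> * Lfac K (f s) (m s) - \<delta>)"
    unfolding Lfac_def using Kpos by (intro continuous_intros cont_f cont_m) auto
  then obtain B where B: "\<forall>s\<in>{0..T}. \<bar>1/2 * m s * \<beta> * Lfac K (f s) (m s) - \<delta>\<bar> \<le> B" using cbound by blast
  have cb: "\<bar>c s\<bar> \<le> B + 1" if "s \<in> {0..T}" for s
    using B that eta[OF that] unfolding c_def by (smt (verit))
  have eq: "((\<lambda>s. f s * c s) has_integral (f t - f 0)) {0..t}" if "t \<in> {0..T}" for t
  proof -
    have "FF = (\<lambda>s. f s * c s)" unfolding FF_def c_def by (auto simp: algebra_simps)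
    then show ?thesis using FF_int[OF that] f_0 by simp
  qed
  show ?thesis by (rule positivity[OF _ _ cont_f eq cb t]) (use Tpos f_0 f0pos in auto)
qed

lemma m_pos: "t \<in> {0..T} \<Longrightarrow> 0 < m t"
proof -
  assume t: "t \<in> {0..T}"
  define c where "c s = 1/2 * f s * \<beta> * Lfac K (f s) (m s) - \<delta> + \<eta>2 s" for s
  have "continuous_on {0..T} (\<lambda>s. 1/2 * f s * \<beta> * Lfac K (f s) (m s) - \<delta>)"
    unfolding Lfac_def using Kpos by (intro continuous_intros cont_f cont_m) auto
  then obtain B where B: "\<forall>s\<in>{0..T}. \<bar>1/2 * f s * \<beta> * Lfac K (f s) (m s) - \<delta>\<bar> \<le> B" using cbound by blast
  have cb: "\<bar>c s\<bar> \<le> B + 1" if "s \<in> {0..T}" for s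
    using B that eta[OF that] dpos unfolding c_def by (smt (verit))
  have eq: "((\<lambda>s. m s * c s) has_integral (m t - m 0)) {0..t}" if "t \<in> {0..T}" for t
  proof -
    have "MM = (\<lambda>s. m s * c s)" unfolding MM_def c_def by (auto simp: algebra_simps)
    then show ?thesis using MM_int[OF that] m_0 by simp
  qed
  show ?thesis by (rule positivity[OF _ _ cont_m eq cb t]) (use Tpos m_0 m0pos in auto)
qed

lemma lower: "\<exists>lo>0. \<forall>s\<in>{0..T}. lo \<le> f s \<and> lo \<le> m s"
proof -
  obtain x where x: "x \<in> {0..T}" "\<forall>y\<in>{0..T}. f x \<le> f y"
    using continuous_attains_inf[OF _ _ cont_f] Tpos by auto
  obtain z where z: "z \<in> {0..T}" "\<forall>y\<in>{0..T}. m z \<le> m y"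
    using continuous_attains_inf[OF _ _ cont_m] Tpos by auto
  show ?thesis
    by (rule exI[of _ "min (f x) (m z)"]) (use x z f_pos m_pos in auto)
qed

definition "A11 s = m s * \<beta> / 2 * Lfac K (f s) (m s) - f s * m s * \<beta> / (2 * K) - \<delta> - \<eta>1 s"
definition "A21 s = m s * \<beta> / 2 * Lfac K (f s) (m s) - f s * m s * \<beta> / (2 * K)"
definition "A12 s = f s * \<beta> / 2 * Lfac K (f s) (m s) - f s * m s * \<beta> / (2 * K)"
definition "A22 s = f s * \<beta> / 2 * Lfac K (f s) (m s) - f s * m s * \<beta> / (2 * K) - \<delta> + \<eta>2 s"

lemma meas_A[measurable]: "A11 \<in> borel_measurable (lebesgue_on {0..T})" "A12 \<in> borel_measurable (lebesgue_on {0..T})"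
  "A21 \<in> borel_measurable (lebesgue_on {0..T})" "A22 \<in> borel_measurable (lebesgue_on {0..T})"
  unfolding A11_def[abs_def] A12_def[abs_def] A21_def[abs_def] A22_def[abs_def] Lfac_def
  by (intro borel_measurable_add borel_measurable_diff borel_measurable_times borel_measurable_divide
      borel_measurable_const meas_f meas_m meas_eta1 meas_eta2)+

lemma bound_A: "\<exists>MA>0. \<forall>s\<in>{0..T}. \<bar>A11 s\<bar> \<le> MA \<and> \<bar>A12 s\<bar> \<le> MA \<and> \<bar>A21 s\<bar> \<le> MA \<and> \<bar>A22 s\<bar> \<le> MA"
proof -
  have "continuous_on {0..T} A21" unfolding A21_def[abs_def] Lfac_def using Kpos
    by (intro continuous_intros cont_f cont_m) auto
  then obtain B1 where B1: "\<forall>s\<in>{0..T}. \<bar>A21 s\<bar> \<le> B1" using cbound by blast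
  have "continuous_on {0..T} A12" unfolding A12_def[abs_def] Lfac_def using Kpos
    by (intro continuous_intros cont_f cont_m) auto
  then obtain B2 where B2: "\<forall>s\<in>{0..T}. \<bar>A12 s\<bar> \<le> B2" using cbound by blast
  have a11: "A11 s = A21 s - \<delta> - \<eta>1 s" and a22: "A22 s = A12 s - \<delta> + \<eta>2 s" for s
    unfolding A11_def A21_def A12_def A22_def by simp_all
  show ?thesis
  proof (intro exI[of _ "\<bar>B1\<bar> + \<bar>B2\<bar> + 2"] conjI ballI)
    show "0 < \<bar>B1\<bar> + \<bar>B2\<bar> + 2" by simp
    fix s assume s: "s \<in> {0..T}"
    note e = eta[OF s] B1[rule_format, OF s] B2[rule_format, OF s] dpos
    show "\<bar>A11 s\<bar> \<le> \<bar>B1\<bar> + \<bar>B2\<bar> + 2" using e unfolding a11 by linarith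
    show "\<bar>A12 s\<bar> \<le> \<bar>B1\<bar> + \<bar>B2\<bar> + 2" using e by linarith
    show "\<bar>A21 s\<bar> \<le> \<bar>B1\<bar> + \<bar>B2\<bar> + 2" using e by linarith
    show "\<bar>A22 s\<bar> \<le> \<bar>B1\<bar> + \<bar>B2\<bar> + 2" using e unfolding a22 by linarith
  qed
qed

definition "ADJ p1 p2 \<longleftrightarrow> continuous_on {0..T} p1 \<and> continuous_on {0..T} p2 \<and> p1 T = 0 \<and> p2 T = 0 \<and>
      (\<forall>t\<in>{0..T}. ((\<lambda>s. 1 - p1 s * A11 s - p2 s * A21 s) has_integral (p1 T - p1 t)) {t..T} \<and>
                  ((\<lambda>s. 1 - p1 s * A12 s - p2 s * A22 s) has_integral (p2 T - p2 t)) {t..T})"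

lemma ex_adj: "\<exists>p1 p2. ADJ p1 p2"
proof -
  obtain MA where MA: "MA > 0" "\<forall>s\<in>{0..T}. \<bar>A11 s\<bar> \<le> MA \<and> \<bar>A12 s\<bar> \<le> MA \<and> \<bar>A21 s\<bar> \<le> MA \<and> \<bar>A22 s\<bar> \<le> MA"
    using bound_A by blast
  have "\<exists>p1 p2. continuous_on {0..T} p1 \<and> continuous_on {0..T} p2 \<and> p1 T = 0 \<and> p2 T = 0 \<and>
      (\<forall>t\<in>{0..T}. ((\<lambda>s. 1 - p1 s * A11 s - p2 s * A21 s) has_integral (p1 T - p1 t)) {t..T} \<and>
                  ((\<lambda>s. 1 - p1 s * A12 s - p2 s * A22 s) has_integral (p2 T - p2 t)) {t..T})"
  proof (rule backward2[OF _ MA(1)])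
    show "0 \<le> T" using Tpos by simp
    show "\<And>s. s \<in> {0..T} \<Longrightarrow> \<bar>A11 s\<bar> \<le> MA \<and> \<bar>A12 s\<bar> \<le> MA \<and> \<bar>A21 s\<bar> \<le> MA \<and> \<bar>A22 s\<bar> \<le> MA"
      using MA by auto
    fix x y :: "real \<Rightarrow> real" assume cx: "continuous_on {0..T} x" and cy: "continuous_on {0..T} y"
    have "(\<lambda>s. A11 s * x s + A21 s * y s + 0) integrable_on {0..T}"
      by (rule lin_integrable[OF meas_A(1) meas_A(3) _ _ cx cy]) (use MA in auto)
    moreover have "(\<lambda>s. A12 s * x s + A22 s * y s + 0) integrable_on {0..T}"
      by (rule lin_integrable[OF meas_A(2) meas_A(4) _ _ cx cy]) (use MA in auto)
    ultimately show "(\<lambda>s. A11 s * x s + A21 s * y s) integrable_on {0..T} \<and>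
      (\<lambda>s. A12 s * x s + A22 s * y s) integrable_on {0..T}" by simp
  qed
  then show ?thesis unfolding ADJ_def .
qed

definition "lam = (SOME p. ADJ (fst p) (snd p))"
definition "l1 = fst lam"
definition "l2 = snd lam"

lemma adj: "ADJ l1 l2"
proof -
  have "\<exists>p. ADJ (fst p) (snd p)" using ex_adj by auto
  then show ?thesis unfolding l1_def l2_def lam_def by (rule someI_ex)
qed

lemma is_adj: "is_adjoint1 \<beta> \<delta> K T \<eta>1 \<eta>2 f m l1 l2"
  using adj unfolding ADJ_def is_adjoint1_def A11_def A12_def A21_def A22_def by blast

end

definition BM :: "real \<Rightarrow> (real \<Rightarrow> real) \<Rightarrow> bool" where
  "BM T q \<longleftrightarrow> q \<in> borel_measurable (lebesgue_on {0..T}) \<and> (\<exists>B. \<forall>s\<in>{0..T}. \<bar>q s\<bar> \<le> B)"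

lemma BM_const: "BM T (\<lambda>s. c)" unfolding BM_def by auto
lemma BM_cont: "continuous_on {0..T} q \<Longrightarrow> BM T q"
  unfolding BM_def using cbound[of T q] by (auto intro: continuous_imp_measurable_on_sets_lebesgue)
lemma BM_add: "BM T p \<Longrightarrow> BM T q \<Longrightarrow> BM T (\<lambda>s. p s + q s)"
proof -
  assume "BM T p" "BM T q"
  then obtain B1 B2 where m: "p \<in> borel_measurable (lebesgue_on {0..T})" "q \<in> borel_measurable (lebesgue_on {0..T})"
    and b: "\<forall>s\<in>{0..T}. \<bar>p s\<bar> \<le> B1" "\<forall>s\<in>{0..T}. \<bar>q s\<bar> \<le> B2" unfolding BM_def by blast
  have "\<bar>p s + q s\<bar> \<le> B1 + B2" if "s \<in> {0..T}" for s
    using b that abs_triangle_ineq[of "p s" "q s"] by fastforce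
  moreover have "(\<lambda>s. p s + q s) \<in> borel_measurable (lebesgue_on {0..T})" using m by (rule borel_measurable_add)
  ultimately show ?thesis unfolding BM_def by blast
qed
lemma BM_minus: "BM T p \<Longrightarrow> BM T (\<lambda>s. - p s)"
  unfolding BM_def by auto
lemma BM_diff: "BM T p \<Longrightarrow> BM T q \<Longrightarrow> BM T (\<lambda>s. p s - q s)"
  using BM_add[of T p "\<lambda>s. - q s"] BM_minus[of T q] by simp
lemma BM_mult: "BM T p \<Longrightarrow> BM T q \<Longrightarrow> BM T (\<lambda>s. p s * q s)"
proof -
  assume "BM T p" "BM T q"
  then obtain B1 B2 where m: "p \<in> borel_measurable (lebesgue_on {0..T})" "q \<in> borel_measurable (lebesgue_on {0..T})"
    and b: "\<forall>s\<in>{0..T}. \<bar>p s\<bar> \<le> B1" "\<forall>s\<in>{0..T}. \<bar>q s\<bar> \<le> B2" unfolding BM_def by blast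
  have "\<bar>p s * q s\<bar> \<le> \<bar>B1\<bar> * \<bar>B2\<bar>" if "s \<in> {0..T}" for s
    unfolding abs_mult using b that by (intro mult_mono) (auto intro: order_trans[OF _ abs_ge_self])
  moreover have "(\<lambda>s. p s * q s) \<in> borel_measurable (lebesgue_on {0..T})" using m by (rule borel_measurable_times)
  ultimately show ?thesis unfolding BM_def by blast
qed
lemma BM_inverse:
  assumes "BM T p" "\<And>s. s \<in> {0..T} \<Longrightarrow> lo \<le> \<bar>p s\<bar>" "0 < lo"
  shows "BM T (\<lambda>s. 1 / p s)"
proof -
  have m: "(\<lambda>s. 1 / p s) \<in> borel_measurable (lebesgue_on {0..T})" using assms(1) unfolding BM_def
    by (intro borel_measurable_divide borel_measurable_const) auto
  have "\<bar>1 / p s\<bar> \<le> 1 / lo" if "s \<in> {0..T}" for s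
    using assms(2)[OF that] assms(3) by (simp add: abs_div frac_le)
  then show ?thesis unfolding BM_def using m by blast
qed
lemma BM_meas: "q \<in> borel_measurable (lebesgue_on {0..T}) \<Longrightarrow> (\<And>s. s \<in> {0..T} \<Longrightarrow> \<bar>q s\<bar> \<le> B) \<Longrightarrow> BM T q"
  unfolding BM_def by blast
lemma BM_integrable: "BM T q \<Longrightarrow> q integrable_on {0..T}"
  unfolding BM_def using bm_integrable by blast
lemma BM_integrable_sub: "BM T q \<Longrightarrow> {a..b} \<subseteq> {0..T} \<Longrightarrow> q integrable_on {a..b}"
  using BM_integrable integrable_on_subinterval by blast

context oc begin

lemma l_cont: "continuous_on {0..T} l1" "continuous_on {0..T} l2" and l_T: "l1 T = 0" "l2 T = 0"
  using adj unfolding ADJ_def by auto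

lemma l_int: "t \<in> {0..T} \<Longrightarrow> ((\<lambda>s. 1 - l1 s * A11 s - l2 s * A21 s) has_integral (- l1 t)) {t..T}"
  "t \<in> {0..T} \<Longrightarrow> ((\<lambda>s. 1 - l1 s * A12 s - l2 s * A22 s) has_integral (- l2 t)) {t..T}"
  using adj unfolding ADJ_def by auto

lemma BM_A: "BM T A11" "BM T A12" "BM T A21" "BM T A22"
  using bound_A meas_A unfolding BM_def by blast+

lemma BM_basic: "BM T f" "BM T m" "BM T l1" "BM T l2" "BM T \<eta>1" "BM T \<eta>2"
proof -
  show "BM T f" "BM T m" "BM T l1" "BM T l2" using BM_cont cont_f cont_m l_cont by auto
  show "BM T \<eta>1" by (rule BM_meas[OF meas_eta1, of 1]) (use eta in force)
  show "BM T \<eta>2" by (rule BM_meas[OF meas_eta2, of 1]) (use eta dpos in force)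
qed

lemma BM_bounds: "BM T p \<Longrightarrow> BM T q \<Longrightarrow> \<exists>M. p \<in> borel_measurable (lebesgue_on {0..T}) \<and> q \<in> borel_measurable (lebesgue_on {0..T}) \<and>
   (\<forall>s\<in>{0..T}. \<bar>p s\<bar> \<le> M \<and> \<bar>q s\<bar> \<le> M)"
proof -
  assume "BM T p" "BM T q"
  then obtain B1 B2 where "p \<in> borel_measurable (lebesgue_on {0..T})" "q \<in> borel_measurable (lebesgue_on {0..T})"
    "\<forall>s\<in>{0..T}. \<bar>p s\<bar> \<le> B1" "\<forall>s\<in>{0..T}. \<bar>q s\<bar> \<le> B2" unfolding BM_def by blast
  then show ?thesis by (intro exI[of _ "max B1 B2"]) force
qed

lemma duality:
  fixes \<phi> \<psi> b1 b2 :: "real \<Rightarrow> real"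
  assumes c\<phi>: "continuous_on {0..T} \<phi>" and c\<psi>: "continuous_on {0..T} \<psi>"
    and b1: "BM T b1" and b2: "BM T b2"
    and h\<phi>: "\<And>t. t \<in> {0..T} \<Longrightarrow> ((\<lambda>s. A11 s * \<phi> s + A12 s * \<psi> s + b1 s) has_integral \<phi> t) {0..t}"
    and h\<psi>: "\<And>t. t \<in> {0..T} \<Longrightarrow> ((\<lambda>s. A21 s * \<phi> s + A22 s * \<psi> s + b2 s) has_integral \<psi> t) {0..t}"
  shows "integral {0..T} (\<lambda>s. \<phi> s + \<psi> s) = - integral {0..T} (\<lambda>s. l1 s * b1 s + l2 s * b2 s)"
proof -
  define L1 where "L1 s = 1 - l1 s * A11 s - l2 s * A21 s" for s
  define L2 where "L2 s = 1 - l1 s * A12 s - l2 s * A22 s" for s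
  define k1 where "k1 s = A11 s * \<phi> s + A12 s * \<psi> s + b1 s" for s
  define k2 where "k2 s = A21 s * \<phi> s + A22 s * \<psi> s + b2 s" for s
  note BB = BM_A BM_basic b1 b2 BM_cont[OF c\<phi>] BM_cont[OF c\<psi>]
  have bL1: "BM T L1" unfolding L1_def[abs_def] by (intro BM_diff BM_mult BM_const BB)
  have bL2: "BM T L2" unfolding L2_def[abs_def] by (intro BM_diff BM_mult BM_const BB)
  have bk1: "BM T k1" unfolding k1_def[abs_def] by (intro BM_add BM_mult BB)
  have bk2: "BM T k2" unfolding k2_def[abs_def] by (intro BM_add BM_mult BB)
  have T0: "0 \<le> T" using Tpos by simp
  have E: "integral {0..T} (\<lambda>t. L t * x t) = integral {0..T} (\<lambda>s. k s * - l s)"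
    if bL: "BM T L" and bk: "BM T k" and hx: "\<And>t. t \<in> {0..T} \<Longrightarrow> (k has_integral x t) {0..t}"
      and hl: "\<And>t. t \<in> {0..T} \<Longrightarrow> (L has_integral (- l t)) {t..T}"
    for L k x l
  proof -
    obtain M where M: "L \<in> borel_measurable (lebesgue_on {0..T})" "k \<in> borel_measurable (lebesgue_on {0..T})"
      "\<forall>s\<in>{0..T}. \<bar>L s\<bar> \<le> M \<and> \<bar>k s\<bar> \<le> M" using BM_bounds[OF bL bk] by blast
    have "integral {0..T} (\<lambda>t. L t * integral {0..t} k) = integral {0..T} (\<lambda>s. k s * integral {s..T} L)"
      by (rule fubini_leb[OF M(1,2) _ T0]) (use M(3) in auto)
    moreover have "integral {0..T} (\<lambda>t. L t * integral {0..t} k) = integral {0..T} (\<lambda>t. L t * x t)"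
      by (rule integral_cong) (use hx in \<open>auto intro: integral_unique\<close>)
    moreover have "integral {0..T} (\<lambda>s. k s * integral {s..T} L) = integral {0..T} (\<lambda>s. k s * - l s)"
    proof (rule integral_cong)
      fix s assume "s \<in> {0..T}"
      then have "integral {s..T} L = - l s" by (rule integral_unique[OF hl])
      then show "k s * integral {s..T} L = k s * - l s" by simp
    qed
    ultimately show ?thesis by simp
  qed
  have E1: "integral {0..T} (\<lambda>t. L1 t * \<phi> t) = integral {0..T} (\<lambda>s. k1 s * - l1 s)"
    by (rule E[OF bL1 bk1]) (use h\<phi> l_int in \<open>auto simp: k1_def[abs_def] L1_def[abs_def]\<close>)
  have E2: "integral {0..T} (\<lambda>t. L2 t * \<psi> t) = integral {0..T} (\<lambda>s. k2 s * - l2 s)"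
    by (rule E[OF bL2 bk2]) (use h\<psi> l_int in \<open>auto simp: k2_def[abs_def] L2_def[abs_def]\<close>)
  have i1: "(\<lambda>t. L1 t * \<phi> t) integrable_on {0..T}" "(\<lambda>t. L2 t * \<psi> t) integrable_on {0..T}"
    "(\<lambda>t. k1 t * l1 t) integrable_on {0..T}" "(\<lambda>t. k2 t * l2 t) integrable_on {0..T}"
    by (intro BM_integrable BM_mult BB bL1 bL2 bk1 bk2)+
  have j12: "(\<lambda>t. L1 t * \<phi> t + L2 t * \<psi> t) integrable_on {0..T}" by (rule integrable_add[OF i1(1) i1(2)])
  have j123: "(\<lambda>t. L1 t * \<phi> t + L2 t * \<psi> t + k1 t * l1 t) integrable_on {0..T}" by (rule integrable_add[OF j12 i1(3)])
  have n1: "integral {0..T} (\<lambda>s. k1 s * - l1 s) = - integral {0..T} (\<lambda>s. k1 s * l1 s)"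
    unfolding mult_minus_right by (rule integral_neg)
  have n2: "integral {0..T} (\<lambda>s. k2 s * - l2 s) = - integral {0..T} (\<lambda>s. k2 s * l2 s)"
    unfolding mult_minus_right by (rule integral_neg)
  have Z: "integral {0..T} (\<lambda>t. L1 t * \<phi> t + L2 t * \<psi> t + k1 t * l1 t + k2 t * l2 t) = 0"
    unfolding integral_add[OF j123 i1(4)] integral_add[OF j12 i1(3)] integral_add[OF i1(1) i1(2)]
    using E1 E2 n1 n2 by linarith
  have pw: "L1 t * \<phi> t + L2 t * \<psi> t + k1 t * l1 t + k2 t * l2 t = (\<phi> t + \<psi> t) + (l1 t * b1 t + l2 t * b2 t)" for t
    unfolding L1_def L2_def k1_def k2_def by (simp add: algebra_simps)
  have i2: "(\<lambda>t. \<phi> t + \<psi> t) integrable_on {0..T}" "(\<lambda>t. l1 t * b1 t + l2 t * b2 t) integrable_on {0..T}"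
    by (intro BM_integrable BM_mult BM_add BB)+
  have "integral {0..T} (\<lambda>t. \<phi> t + \<psi> t) + integral {0..T} (\<lambda>t. l1 t * b1 t + l2 t * b2 t) = 0"
    using Z unfolding pw integral_add[OF i2] .
  then show ?thesis by linarith
qed

end

lemma ident1:
  fixes f m p q e1 w1 e b d K Q A11 A12 :: real
  assumes g: "f + e * p \<noteq> 0" and K: "K \<noteq> 0"
    and Q: "Q = 1/2*b*(p*q - (p^2*m + 2*f*p*q + 2*m*p*q + f*q^2)/K) + e * (-(1/2)*b*(p^2*q + p*q^2)/K)"
    and A11: "A11 = m * b / 2 * Lfac K f m - f * m * b / (2 * K) - d - e1"
    and A12: "A12 = f * b / 2 * Lfac K f m - f * m * b / (2 * K)"
  shows "1/2 * (f + e*p) * (m + e*q) * b * Lfac K (f + e*p) (m + e*q) - d * (f + e*p)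
     - (e1 + e * w1 + e^2 * ((Q - w1 * p) / (f + e*p))) * (f + e*p)
   = (1/2 * f * m * b * Lfac K f m - d * f - e1 * f) + e * (A11 * p + A12 * q + - (f * w1))"
proof -
  have c: "X / (f + e*p) * (f + e*p) = X" for X using g by simp
  show ?thesis
    unfolding Lfac_def distrib_right[of _ _ "f + e*p"] mult.assoc[of "e^2"] c Q A11 A12
    using K by (simp add: field_simps) (simp add: algebra_simps power2_eq_square)
qed

lemma ident2:
  fixes f m p q e2 w2 e b d K Q A21 A22 :: real
  assumes h: "m + e * q \<noteq> 0" and K: "K \<noteq> 0"
    and Q: "Q = 1/2*b*(p*q - (p^2*m + 2*f*p*q + 2*m*p*q + f*q^2)/K) + e * (-(1/2)*b*(p^2*q + p*q^2)/K)"
    and A21: "A21 = m * b / 2 * Lfac K f m - f * m * b / (2 * K)"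
    and A22: "A22 = f * b / 2 * Lfac K f m - f * m * b / (2 * K) - d + e2"
  shows "1/2 * (f + e*p) * (m + e*q) * b * Lfac K (f + e*p) (m + e*q) - d * (m + e*q)
     + (e2 + e * w2 + e^2 * (- ((Q + q * w2) / (m + e*q)))) * (m + e*q)
   = (1/2 * f * m * b * Lfac K f m - d * m + e2 * m) + e * (A21 * p + A22 * q + m * w2)"
proof -
  have c: "X / (m + e*q) * (m + e*q) = X" for X using h by simp
  show ?thesis
    unfolding Lfac_def distrib_right[of _ _ "m + e*q"] mult.assoc[of "e^2"] mult_minus_left c Q A21 A22
    using K by (simp add: field_simps) (simp add: algebra_simps power2_eq_square)
qed

context oc begin


definition "QQ \<phi> \<psi> e s = 1/2*\<beta>*(\<phi> s*\<psi> s - ((\<phi> s)^2*m s + 2*f s*\<phi> s*\<psi> s + 2*m s*\<phi> s*\<psi> s + f s*(\<psi> s)^2)/K) + e * (-(1/2)*\<beta>*((\<phi> s)^2*\<psi> s + \<phi> s*(\<psi> s)^2)/K)"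
definition "R1 \<phi> \<psi> w1 e s = (QQ \<phi> \<psi> e s - w1 s * \<phi> s) / (f s + e * \<phi> s)"
definition "R2 \<phi> \<psi> w2 e s = - ((QQ \<phi> \<psi> e s + \<psi> s * w2 s) / (m s + e * \<psi> s))"
definition "U1 \<phi> \<psi> w1 e s = \<eta>1 s + e * w1 s + e^2 * R1 \<phi> \<psi> w1 e s"
definition "U2 \<phi> \<psi> w2 e s = \<eta>2 s + e * w2 s + e^2 * R2 \<phi> \<psi> w2 e s"

lemma meas_QQ:
  assumes "\<phi> \<in> borel_measurable (lebesgue_on {0..T})" "\<psi> \<in> borel_measurable (lebesgue_on {0..T})"
  shows "QQ \<phi> \<psi> e \<in> borel_measurable (lebesgue_on {0..T})"
  unfolding QQ_def[abs_def]
  by (intro borel_measurable_add borel_measurable_diff borel_measurable_times borel_measurable_divide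
      borel_measurable_power borel_measurable_uminus borel_measurable_const meas_f meas_m assms)+

lemma meas_R:
  assumes m\<phi>: "\<phi> \<in> borel_measurable (lebesgue_on {0..T})" and m\<psi>: "\<psi> \<in> borel_measurable (lebesgue_on {0..T})"
    and mw1: "w1 \<in> borel_measurable (lebesgue_on {0..T})" and mw2: "w2 \<in> borel_measurable (lebesgue_on {0..T})"
  shows "R1 \<phi> \<psi> w1 e \<in> borel_measurable (lebesgue_on {0..T})" "R2 \<phi> \<psi> w2 e \<in> borel_measurable (lebesgue_on {0..T})"
    "U1 \<phi> \<psi> w1 e \<in> borel_measurable (lebesgue_on {0..T})" "U2 \<phi> \<psi> w2 e \<in> borel_measurable (lebesgue_on {0..T})"
proof -
  note q = meas_QQ[OF m\<phi> m\<psi>, of e]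
  show r1: "R1 \<phi> \<psi> w1 e \<in> borel_measurable (lebesgue_on {0..T})" unfolding R1_def[abs_def]
    by (intro borel_measurable_add borel_measurable_diff borel_measurable_times borel_measurable_divide
      borel_measurable_const meas_f meas_m q m\<phi> m\<psi> mw1)+
  show r2: "R2 \<phi> \<psi> w2 e \<in> borel_measurable (lebesgue_on {0..T})" unfolding R2_def[abs_def]
    by (intro borel_measurable_uminus borel_measurable_add borel_measurable_diff borel_measurable_times borel_measurable_divide
      borel_measurable_const meas_f meas_m q m\<phi> m\<psi> mw2)+
  show "U1 \<phi> \<psi> w1 e \<in> borel_measurable (lebesgue_on {0..T})" unfolding U1_def[abs_def]
    by (intro borel_measurable_add borel_measurable_times borel_measurable_const meas_eta1 mw1 r1)+
  show "U2 \<phi> \<psi> w2 e \<in> borel_measurable (lebesgue_on {0..T})" unfolding U2_def[abs_def]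
    by (intro borel_measurable_add borel_measurable_times borel_measurable_const meas_eta2 mw2 r2)+
qed

lemma J_pointwise:
  "- ((f s + e * \<phi> s) + (m s + e * \<psi> s)) - 1/2 * ((U1 \<phi> \<psi> w1 e s)^2 + (U2 \<phi> \<psi> w2 e s)^2)
   = (- (f s + m s) - 1/2 * ((\<eta>1 s)^2 + (\<eta>2 s)^2)) + e * (- (\<phi> s + \<psi> s) - \<eta>1 s * w1 s - \<eta>2 s * w2 s)
     - e^2 * (1/2 * (w1 s + e * R1 \<phi> \<psi> w1 e s)^2 + \<eta>1 s * R1 \<phi> \<psi> w1 e s + 1/2 * (w2 s + e * R2 \<phi> \<psi> w2 e s)^2 + \<eta>2 s * R2 \<phi> \<psi> w2 e s)"
  unfolding U1_def U2_def by (simp add: algebra_simps power2_eq_square)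

lemma state_pert:
  fixes \<phi> \<psi> w1 w2 :: "real \<Rightarrow> real" and e :: real
  assumes h\<phi>: "\<And>t. t \<in> {0..T} \<Longrightarrow> ((\<lambda>s. A11 s * \<phi> s + A12 s * \<psi> s + - (f s * w1 s)) has_integral \<phi> t) {0..t}"
    and h\<psi>: "\<And>t. t \<in> {0..T} \<Longrightarrow> ((\<lambda>s. A21 s * \<phi> s + A22 s * \<psi> s + m s * w2 s) has_integral \<psi> t) {0..t}"
    and gnz: "\<And>s. s \<in> {0..T} \<Longrightarrow> f s + e * \<phi> s \<noteq> 0"
    and hnz: "\<And>s. s \<in> {0..T} \<Longrightarrow> m s + e * \<psi> s \<noteq> 0"
  shows "is_state1 \<beta> \<delta> K T f0 m0 (U1 \<phi> \<psi> w1 e) (U2 \<phi> \<psi> w2 e) (\<lambda>s. f s + e * \<phi> s) (\<lambda>s. m s + e * \<psi> s)"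
  unfolding is_state1_def
proof (intro conjI ballI)
  have T0: "0 \<in> {0..T}" using Tpos by simp
  have "\<phi> 0 = 0" using h\<phi>[OF T0] by (rule has_integral_point0)
  then show "f 0 + e * \<phi> 0 = f0" using f_0 by simp
  have "\<psi> 0 = 0" using h\<psi>[OF T0] by (rule has_integral_point0)
  then show "m 0 + e * \<psi> 0 = m0" using m_0 by simp
  fix t assume t: "t \<in> {0..T}"
  have K0: "K \<noteq> 0" using Kpos by simp
  have "((\<lambda>s. FF s + e * (A11 s * \<phi> s + A12 s * \<psi> s + - (f s * w1 s))) has_integral (f t - f0 + e * \<phi> t)) {0..t}"
    by (intro has_integral_add has_integral_mult_right FF_int t h\<phi>)
  moreover have "1/2 * (f s + e * \<phi> s) * (m s + e * \<psi> s) * \<beta> * Lfac K (f s + e * \<phi> s) (m s + e * \<psi> s)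
      - \<delta> * (f s + e * \<phi> s) - U1 \<phi> \<psi> w1 e s * (f s + e * \<phi> s)
      = FF s + e * (A11 s * \<phi> s + A12 s * \<psi> s + - (f s * w1 s))" if "s \<in> {0..t}" for s
  proof -
    have s: "s \<in> {0..T}" using that t by auto
    show ?thesis unfolding U1_def R1_def FF_def
      by (rule ident1[OF gnz[OF s] K0 QQ_def[of \<phi> \<psi> e s] A11_def[of s] A12_def[of s]])
  qed
  ultimately show "((\<lambda>s. 1/2 * (f s + e * \<phi> s) * (m s + e * \<psi> s) * \<beta> * Lfac K (f s + e * \<phi> s) (m s + e * \<psi> s)
      - \<delta> * (f s + e * \<phi> s) - U1 \<phi> \<psi> w1 e s * (f s + e * \<phi> s)) has_integral (f t + e * \<phi> t - f0)) {0..t}"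
    by (subst has_integral_cong) (auto simp: algebra_simps)
  have "((\<lambda>s. MM s + e * (A21 s * \<phi> s + A22 s * \<psi> s + m s * w2 s)) has_integral (m t - m0 + e * \<psi> t)) {0..t}"
    by (intro has_integral_add has_integral_mult_right MM_int t h\<psi>)
  moreover have "1/2 * (f s + e * \<phi> s) * (m s + e * \<psi> s) * \<beta> * Lfac K (f s + e * \<phi> s) (m s + e * \<psi> s)
      - \<delta> * (m s + e * \<psi> s) + U2 \<phi> \<psi> w2 e s * (m s + e * \<psi> s)
      = MM s + e * (A21 s * \<phi> s + A22 s * \<psi> s + m s * w2 s)" if "s \<in> {0..t}" for s
  proof -
    have s: "s \<in> {0..T}" using that t by auto
    show ?thesis unfolding U2_def R2_def MM_def
      by (rule ident2[OF hnz[OF s] K0 QQ_def[of \<phi> \<psi> e s] A21_def[of s] A22_def[of s]])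
  qed
  ultimately show "((\<lambda>s. 1/2 * (f s + e * \<phi> s) * (m s + e * \<psi> s) * \<beta> * Lfac K (f s + e * \<phi> s) (m s + e * \<psi> s)
      - \<delta> * (m s + e * \<psi> s) + U2 \<phi> \<psi> w2 e s * (m s + e * \<psi> s)) has_integral (m t + e * \<psi> t - m0)) {0..t}"
    by (subst has_integral_cong) (auto simp: algebra_simps)
qed


lemma perturb:
  fixes v1 v2 \<phi> \<psi> :: "real \<Rightarrow> real" and a :: real
  assumes a: "0 < a"
    and mv1: "v1 \<in> borel_measurable (lebesgue_on {0..T})" and mv2: "v2 \<in> borel_measurable (lebesgue_on {0..T})"
    and vb: "\<And>s. s \<in> {0..T} \<Longrightarrow> a \<le> v1 s \<and> v1 s \<le> 1 - a \<and> a \<le> v2 s \<and> v2 s \<le> \<delta> - a"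
    and c\<phi>: "continuous_on {0..T} \<phi>" and c\<psi>: "continuous_on {0..T} \<psi>"
    and h\<phi>: "\<And>t. t \<in> {0..T} \<Longrightarrow> ((\<lambda>s. A11 s * \<phi> s + A12 s * \<psi> s + - (f s * (v1 s - \<eta>1 s))) has_integral \<phi> t) {0..t}"
    and h\<psi>: "\<And>t. t \<in> {0..T} \<Longrightarrow> ((\<lambda>s. A21 s * \<phi> s + A22 s * \<psi> s + m s * (v2 s - \<eta>2 s)) has_integral \<psi> t) {0..t}"
  shows "integral {0..T} (\<lambda>s. - (\<phi> s + \<psi> s) - \<eta>1 s * (v1 s - \<eta>1 s) - \<eta>2 s * (v2 s - \<eta>2 s)) \<le> 0"
proof -
  define w1 where "w1 s = v1 s - \<eta>1 s" for s
  define w2 where "w2 s = v2 s - \<eta>2 s" for s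
  have mw1: "w1 \<in> borel_measurable (lebesgue_on {0..T})" unfolding w1_def[abs_def] using mv1 meas_eta1 by (rule borel_measurable_diff)
  have mw2: "w2 \<in> borel_measurable (lebesgue_on {0..T})" unfolding w2_def[abs_def] using mv2 meas_eta2 by (rule borel_measurable_diff)
  have m\<phi>: "\<phi> \<in> borel_measurable (lebesgue_on {0..T})" by (rule continuous_imp_measurable_on_sets_lebesgue[OF c\<phi>]) auto
  have m\<psi>: "\<psi> \<in> borel_measurable (lebesgue_on {0..T})" by (rule continuous_imp_measurable_on_sets_lebesgue[OF c\<psi>]) auto
  have wb: "\<bar>w1 s\<bar> \<le> 1 \<and> \<bar>w2 s\<bar> \<le> 1" if "s \<in> {0..T}" for s
    using vb[OF that] eta[OF that] dpos a unfolding w1_def w2_def by auto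
  obtain lo where lo: "lo > 0" "\<forall>s\<in>{0..T}. lo \<le> f s \<and> lo \<le> m s" using lower by blast
  obtain B1 where B1: "\<forall>s\<in>{0..T}. \<bar>\<phi> s\<bar> \<le> B1" using cbound[OF c\<phi>] by blast
  obtain B2 where B2: "\<forall>s\<in>{0..T}. \<bar>\<psi> s\<bar> \<le> B2" using cbound[OF c\<psi>] by blast
  define Bp where "Bp = \<bar>B1\<bar> + \<bar>B2\<bar>"
  have Bp0: "0 \<le> Bp" unfolding Bp_def by simp
  have Bp: "\<bar>\<phi> s\<bar> \<le> Bp \<and> \<bar>\<psi> s\<bar> \<le> Bp" if "s \<in> {0..T}" for s
    using B1 B2 that unfolding Bp_def by force
  define c0 where "c0 s = 1/2*\<beta>*(\<phi> s*\<psi> s - ((\<phi> s)^2*m s + 2*f s*\<phi> s*\<psi> s + 2*m s*\<phi> s*\<psi> s + f s*(\<psi> s)^2)/K)" for s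
  define c1 where "c1 s = -(1/2)*\<beta>*((\<phi> s)^2*\<psi> s + \<phi> s*(\<psi> s)^2)/K" for s
  have QQe: "QQ \<phi> \<psi> e s = c0 s + e * c1 s" for e s unfolding QQ_def c0_def c1_def by simp
  have "continuous_on {0..T} c0" unfolding c0_def[abs_def] using Kpos
    by (intro continuous_intros cont_f cont_m c\<phi> c\<psi>) auto
  then obtain C0 where C0: "\<forall>s\<in>{0..T}. \<bar>c0 s\<bar> \<le> C0" using cbound by blast
  have "continuous_on {0..T} c1" unfolding c1_def[abs_def] using Kpos
    by (intro continuous_intros c\<phi> c\<psi>) auto
  then obtain C1 where C1: "\<forall>s\<in>{0..T}. \<bar>c1 s\<bar> \<le> C1" using cbound by blast
  define BQ where "BQ = \<bar>C0\<bar> + \<bar>C1\<bar>"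
  have BQ0: "0 \<le> BQ" unfolding BQ_def by simp
  have BQ: "\<bar>QQ \<phi> \<psi> e s\<bar> \<le> BQ" if s: "s \<in> {0..T}" and e: "0 \<le> e" "e \<le> 1" for e s
  proof -
    have "\<bar>c1 s\<bar> \<le> C1" using C1 s by blast
    then have "\<bar>c1 s\<bar> \<le> \<bar>C1\<bar>" using abs_ge_self[of C1] by linarith
    then have "e * \<bar>c1 s\<bar> \<le> 1 * \<bar>C1\<bar>" using e by (intro mult_mono) auto
    then have "\<bar>e * c1 s\<bar> \<le> \<bar>C1\<bar>" using e by (simp add: abs_mult)
    moreover have "\<bar>c0 s\<bar> \<le> \<bar>C0\<bar>" using C0 s by force
    ultimately show ?thesis unfolding QQe BQ_def by linarith
  qed
  define \<epsilon>1 where "\<epsilon>1 = min (1/2) (lo / (2 * Bp + 1))"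
  have e1pos: "0 < \<epsilon>1" unfolding \<epsilon>1_def using lo Bp0 by auto
  have e1half: "\<epsilon>1 \<le> 1/2" unfolding \<epsilon>1_def by (rule min.cobounded1)
  have e1Bp: "\<epsilon>1 * Bp \<le> lo / 2"
  proof -
    have "\<epsilon>1 * Bp \<le> lo / (2 * Bp + 1) * Bp" unfolding \<epsilon>1_def using Bp0 by (intro mult_right_mono) auto
    also have "\<dots> \<le> lo / 2" using lo Bp0 by (simp add: field_simps)
    finally show ?thesis .
  qed
  have gl: "lo / 2 \<le> f s + e * \<phi> s \<and> lo / 2 \<le> m s + e * \<psi> s" if s: "s \<in> {0..T}" and e: "0 \<le> e" "e \<le> \<epsilon>1" for s e
  proof -
    have "\<bar>e\<bar> * \<bar>\<phi> s\<bar> \<le> \<epsilon>1 * Bp" using Bp[OF s] e e1pos by (intro mult_mono) auto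
    moreover have "\<bar>e\<bar> * \<bar>\<psi> s\<bar> \<le> \<epsilon>1 * Bp" using Bp[OF s] e e1pos by (intro mult_mono) auto
    ultimately have "\<bar>e * \<phi> s\<bar> \<le> lo / 2" "\<bar>e * \<psi> s\<bar> \<le> lo / 2" using e1Bp by (simp_all add: abs_mult)
    then show ?thesis using lo s by force
  qed
  define R where "R = 2 * (BQ + Bp) / lo"
  have R0: "0 \<le> R" unfolding R_def using BQ0 Bp0 lo by simp
  have rb: "\<bar>R1 \<phi> \<psi> w1 e s\<bar> \<le> R \<and> \<bar>R2 \<phi> \<psi> w2 e s\<bar> \<le> R" if s: "s \<in> {0..T}" and e: "0 \<le> e" "e \<le> \<epsilon>1" for s e
  proof -
    have e1: "e \<le> 1" using e e1half by simp
    have q: "\<bar>QQ \<phi> \<psi> e s\<bar> \<le> BQ" by (rule BQ[OF s e(1) e1])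
    have p1: "\<bar>w1 s * \<phi> s\<bar> \<le> Bp" using wb[OF s] Bp[OF s] unfolding abs_mult by (metis abs_ge_zero mult_le_one mult_mono' mult.left_neutral)
    have p2: "\<bar>\<psi> s * w2 s\<bar> \<le> Bp" using wb[OF s] Bp[OF s] unfolding abs_mult by (metis abs_ge_zero mult_le_one mult_mono' mult.right_neutral)
    have n1: "\<bar>QQ \<phi> \<psi> e s - w1 s * \<phi> s\<bar> \<le> BQ + Bp" using q p1 by linarith
    have n2: "\<bar>QQ \<phi> \<psi> e s + \<psi> s * w2 s\<bar> \<le> BQ + Bp" using q p2 by linarith
    have d: "lo / 2 \<le> \<bar>f s + e * \<phi> s\<bar>" "lo / 2 \<le> \<bar>m s + e * \<psi> s\<bar>"
      using gl[OF s e] abs_ge_self[of "f s + e * \<phi> s"] abs_ge_self[of "m s + e * \<psi> s"] by linarith+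
    have "\<bar>QQ \<phi> \<psi> e s - w1 s * \<phi> s\<bar> / \<bar>f s + e * \<phi> s\<bar> \<le> (BQ + Bp) / (lo / 2)"
      by (rule frac_le) (use n1 d lo in auto)
    moreover have "\<bar>QQ \<phi> \<psi> e s + \<psi> s * w2 s\<bar> / \<bar>m s + e * \<psi> s\<bar> \<le> (BQ + Bp) / (lo / 2)"
      by (rule frac_le) (use n2 d lo in auto)
    moreover have "(BQ + Bp) / (lo / 2) = R" unfolding R_def by simp
    ultimately show ?thesis unfolding R1_def R2_def by (simp add: abs_divide)
  qed
  define \<epsilon>0 where "\<epsilon>0 = min \<epsilon>1 (a / (R + 1))"
  have e0pos: "0 < \<epsilon>0" unfolding \<epsilon>0_def using e1pos a R0 by auto
  have e0e1: "\<epsilon>0 \<le> \<epsilon>1" unfolding \<epsilon>0_def by simp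
  have e0R: "\<epsilon>0 * R \<le> a"
  proof -
    have "\<epsilon>0 * R \<le> a / (R + 1) * R" unfolding \<epsilon>0_def using R0 by (intro mult_right_mono) auto
    also have "\<dots> \<le> a" using a R0 by (simp add: field_simps)
    finally show ?thesis .
  qed
  define I where "I = integral {0..T} (\<lambda>s. - (\<phi> s + \<psi> s) - \<eta>1 s * w1 s - \<eta>2 s * w2 s)"
  define CE where "CE = (1 + R)^2 + 2 * R"
  have CE0: "0 \<le> CE" unfolding CE_def using R0 by simp
  have key: "I \<le> e * (CE * T)" if e: "0 < e" "e \<le> \<epsilon>0" for e
  proof -
    have ee1: "e \<le> \<epsilon>1" using e e0e1 by simp
    have ehalf: "e \<le> 1/2" using ee1 e1half by simp
    have e0: "0 \<le> e" using e by simp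
    have eR: "e * R \<le> a" using mult_right_mono[OF e(2) R0] e0R by simp
    have sq: "\<bar>e^2 * r\<bar> \<le> e * a" if "\<bar>r\<bar> \<le> R" for r
    proof -
      have "e * \<bar>r\<bar> \<le> e * R" using that e0 by (rule mult_left_mono)
      then have "e * \<bar>r\<bar> \<le> a" using eR by linarith
      then have "e * (e * \<bar>r\<bar>) \<le> e * a" using e0 by (rule mult_left_mono)
      then show ?thesis using e0 by (simp add: abs_mult power2_eq_square mult.assoc)
    qed
    have adm': "admissible1 \<delta> T (U1 \<phi> \<psi> w1 e) (U2 \<phi> \<psi> w2 e)"
      unfolding admissible1_def
    proof (intro conjI ballI)
      show "U1 \<phi> \<psi> w1 e \<in> borel_measurable (lebesgue_on {0..T})" "U2 \<phi> \<psi> w2 e \<in> borel_measurable (lebesgue_on {0..T})"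
        using meas_R[OF m\<phi> m\<psi> mw1 mw2] by auto
      fix s assume s: "s \<in> {0..T}"
      have r1: "\<bar>e^2 * R1 \<phi> \<psi> w1 e s\<bar> \<le> e * a" using rb[OF s e0 ee1] by (intro sq) auto
      have r2: "\<bar>e^2 * R2 \<phi> \<psi> w2 e s\<bar> \<le> e * a" using rb[OF s e0 ee1] by (intro sq) auto
      have u1: "U1 \<phi> \<psi> w1 e s = (1 - e) * \<eta>1 s + e * v1 s + e^2 * R1 \<phi> \<psi> w1 e s"
        unfolding U1_def w1_def by (simp add: algebra_simps)
      have u2: "U2 \<phi> \<psi> w2 e s = (1 - e) * \<eta>2 s + e * v2 s + e^2 * R2 \<phi> \<psi> w2 e s"
        unfolding U2_def w2_def by (simp add: algebra_simps)
      note vv = vb[OF s] and et = eta[OF s]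
      have f1: "0 \<le> (1 - e) * \<eta>1 s" "(1 - e) * \<eta>1 s \<le> 1 - e"
        using et ehalf by (auto intro: mult_nonneg_nonneg mult_left_le)
      have f2: "0 \<le> (1 - e) * \<eta>2 s" "(1 - e) * \<eta>2 s < (1 - e) * \<delta>"
        using et ehalf by (auto intro: mult_nonneg_nonneg mult_strict_left_mono)
      have f3: "e * a \<le> e * v1 s" "e * v1 s \<le> e * (1 - a)" "e * a \<le> e * v2 s" "e * v2 s \<le> e * (\<delta> - a)"
        using vv e0 by (auto intro: mult_left_mono)
      have f4: "e * (1 - a) = e - e * a" "e * (\<delta> - a) = e * \<delta> - e * a" "(1 - e) * \<delta> = \<delta> - e * \<delta>"
        by (simp_all add: algebra_simps)
      show "0 \<le> U1 \<phi> \<psi> w1 e s" "U1 \<phi> \<psi> w1 e s \<le> 1" "0 \<le> U2 \<phi> \<psi> w2 e s" "U2 \<phi> \<psi> w2 e s < \<delta>"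
        unfolding u1 u2 using r1 r2 f1 f2 f3 f4 by linarith+
    qed
    have stt: "is_state1 \<beta> \<delta> K T f0 m0 (U1 \<phi> \<psi> w1 e) (U2 \<phi> \<psi> w2 e) (\<lambda>s. f s + e * \<phi> s) (\<lambda>s. m s + e * \<psi> s)"
    proof (rule state_pert)
      show "\<And>t. t \<in> {0..T} \<Longrightarrow> ((\<lambda>s. A11 s * \<phi> s + A12 s * \<psi> s + - (f s * w1 s)) has_integral \<phi> t) {0..t}"
        using h\<phi> unfolding w1_def .
      show "\<And>t. t \<in> {0..T} \<Longrightarrow> ((\<lambda>s. A21 s * \<phi> s + A22 s * \<psi> s + m s * w2 s) has_integral \<psi> t) {0..t}"
        using h\<psi> unfolding w2_def .
      show "\<And>s. s \<in> {0..T} \<Longrightarrow> f s + e * \<phi> s \<noteq> 0" using gl[OF _ e0 ee1] lo(1) by force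
      show "\<And>s. s \<in> {0..T} \<Longrightarrow> m s + e * \<psi> s \<noteq> 0" using gl[OF _ e0 ee1] lo(1) by force
    qed
    have Jle: "J1 T (U1 \<phi> \<psi> w1 e) (U2 \<phi> \<psi> w2 e) (\<lambda>s. f s + e * \<phi> s) (\<lambda>s. m s + e * \<psi> s) \<le> J1 T \<eta>1 \<eta>2 f m"
      using opt adm' stt by blast
    define E where "E s = 1/2 * (w1 s + e * R1 \<phi> \<psi> w1 e s)^2 + \<eta>1 s * R1 \<phi> \<psi> w1 e s
        + 1/2 * (w2 s + e * R2 \<phi> \<psi> w2 e s)^2 + \<eta>2 s * R2 \<phi> \<psi> w2 e s" for s
    define Jf where "Jf s = - (f s + m s) - 1/2 * ((\<eta>1 s)^2 + (\<eta>2 s)^2)" for s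
    define Ii where "Ii s = - (\<phi> s + \<psi> s) - \<eta>1 s * w1 s - \<eta>2 s * w2 s" for s
    have Ebd: "\<bar>E s\<bar> \<le> CE \<and> E s \<le> CE" if s: "s \<in> {0..T}" for s
    proof -
      have r: "\<bar>R1 \<phi> \<psi> w1 e s\<bar> \<le> R" "\<bar>R2 \<phi> \<psi> w2 e s\<bar> \<le> R" using rb[OF s e0 ee1] by auto
      have er: "\<bar>e * R1 \<phi> \<psi> w1 e s\<bar> \<le> R" "\<bar>e * R2 \<phi> \<psi> w2 e s\<bar> \<le> R"
      proof -
        have "e * \<bar>R1 \<phi> \<psi> w1 e s\<bar> \<le> 1 * R" using r ehalf e0 by (intro mult_mono) auto
        moreover have "e * \<bar>R2 \<phi> \<psi> w2 e s\<bar> \<le> 1 * R" using r ehalf e0 by (intro mult_mono) auto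
        ultimately show "\<bar>e * R1 \<phi> \<psi> w1 e s\<bar> \<le> R" "\<bar>e * R2 \<phi> \<psi> w2 e s\<bar> \<le> R" using e0 by (simp_all add: abs_mult)
      qed
      have a1: "\<bar>w1 s + e * R1 \<phi> \<psi> w1 e s\<bar> \<le> 1 + R" using wb[OF s] er(1) by linarith
      have a2: "\<bar>w2 s + e * R2 \<phi> \<psi> w2 e s\<bar> \<le> 1 + R" using wb[OF s] er(2) by linarith
      have p1: "(w1 s + e * R1 \<phi> \<psi> w1 e s)^2 \<le> (1 + R)^2"
        using power_mono[OF a1, of 2] by simp
      have p2: "(w2 s + e * R2 \<phi> \<psi> w2 e s)^2 \<le> (1 + R)^2"
        using power_mono[OF a2, of 2] by simp
      have n1: "\<bar>\<eta>1 s * R1 \<phi> \<psi> w1 e s\<bar> \<le> R" "\<bar>\<eta>2 s * R2 \<phi> \<psi> w2 e s\<bar> \<le> R"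
      proof -
        have "\<bar>\<eta>1 s\<bar> * \<bar>R1 \<phi> \<psi> w1 e s\<bar> \<le> 1 * R" using eta[OF s] r by (intro mult_mono) auto
        moreover have "\<bar>\<eta>2 s\<bar> * \<bar>R2 \<phi> \<psi> w2 e s\<bar> \<le> 1 * R" using eta[OF s] r dpos by (intro mult_mono) auto
        ultimately show "\<bar>\<eta>1 s * R1 \<phi> \<psi> w1 e s\<bar> \<le> R" "\<bar>\<eta>2 s * R2 \<phi> \<psi> w2 e s\<bar> \<le> R" by (simp_all add: abs_mult)
      qed
      have z: "0 \<le> (w1 s + e * R1 \<phi> \<psi> w1 e s)^2" "0 \<le> (w2 s + e * R2 \<phi> \<psi> w2 e s)^2" by simp_all
      have n1': "\<eta>1 s * R1 \<phi> \<psi> w1 e s \<le> R" "- (\<eta>1 s * R1 \<phi> \<psi> w1 e s) \<le> R"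
        "\<eta>2 s * R2 \<phi> \<psi> w2 e s \<le> R" "- (\<eta>2 s * R2 \<phi> \<psi> w2 e s) \<le> R" using n1 by (simp_all add: abs_le_iff)
      have o: "0 \<le> (1 + R)^2" by simp
      have up: "E s \<le> CE" unfolding E_def CE_def using p1 p2 n1' by linarith
      have lowr: "- CE \<le> E s" unfolding E_def CE_def using z n1' o R0 by linarith
      show ?thesis using up lowr by (simp add: abs_le_iff)
    qed
    have mE: "E \<in> borel_measurable (lebesgue_on {0..T})"
      unfolding E_def[abs_def] using meas_R(1,2)[OF m\<phi> m\<psi> mw1 mw2, of e]
      by (intro borel_measurable_add borel_measurable_times borel_measurable_power borel_measurable_const meas_eta1 meas_eta2 mw1 mw2) auto
    have iE: "E integrable_on {0..T}" by (rule bm_integrable[OF mE]) (use Ebd in auto)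
    have bw1: "BM T w1" by (rule BM_meas[OF mw1, of 1]) (use wb in auto)
    have bw2: "BM T w2" by (rule BM_meas[OF mw2, of 1]) (use wb in auto)
    note BB = BM_basic BM_cont[OF c\<phi>] BM_cont[OF c\<psi>] bw1 bw2
    have iJ: "Jf integrable_on {0..T}" unfolding Jf_def[abs_def] power2_eq_square
      by (intro BM_integrable BM_diff BM_minus BM_add BM_mult BM_const BB)
    have iI: "Ii integrable_on {0..T}" unfolding Ii_def[abs_def]
      by (intro BM_integrable BM_diff BM_minus BM_add BM_mult BM_const BB)
    have J0: "J1 T \<eta>1 \<eta>2 f m = integral {0..T} Jf" unfolding J1_def Jf_def by simp
    have "J1 T (U1 \<phi> \<psi> w1 e) (U2 \<phi> \<psi> w2 e) (\<lambda>s. f s + e * \<phi> s) (\<lambda>s. m s + e * \<psi> s)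
        = integral {0..T} (\<lambda>s. Jf s + e * Ii s - e^2 * E s)"
      unfolding J1_def Jf_def Ii_def E_def by (rule integral_cong, rule J_pointwise)
    also have "\<dots> = integral {0..T} Jf + e * integral {0..T} Ii - e^2 * integral {0..T} E"
    proof -
      have a: "(\<lambda>s. e * Ii s) integrable_on {0..T}" by (rule has_integral_integrable[OF has_integral_mult_right[OF integrable_integral[OF iI]]])
      have b: "(\<lambda>s. e^2 * E s) integrable_on {0..T}" by (rule has_integral_integrable[OF has_integral_mult_right[OF integrable_integral[OF iE]]])
      show ?thesis using integral_diff[OF integrable_add[OF iJ a] b] integral_add[OF iJ a] by simp
    qed
    finally have J1e: "J1 T (U1 \<phi> \<psi> w1 e) (U2 \<phi> \<psi> w2 e) (\<lambda>s. f s + e * \<phi> s) (\<lambda>s. m s + e * \<psi> s)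
        = integral {0..T} Jf + e * I - e^2 * integral {0..T} E" unfolding I_def Ii_def .
    have "integral {0..T} E \<le> integral {0..T} (\<lambda>_. CE)"
      by (rule integral_le[OF iE integrable_const_ivl]) (use Ebd in auto)
    then have iEb: "integral {0..T} E \<le> CE * T" using Tpos by (simp add: mult.commute)
    have "e * I \<le> e^2 * integral {0..T} E" using Jle J1e J0 by linarith
    also have "\<dots> \<le> e^2 * (CE * T)" using iEb by (intro mult_left_mono) auto
    finally have "e * I \<le> e * (e * (CE * T))" by (simp add: power2_eq_square mult.assoc)
    then show ?thesis using e(1) by (simp add: mult_le_cancel_left_pos)
  qed
  have CET: "0 \<le> CE * T" using CE0 Tpos by simp
  have "I \<le> 0"
  proof (rule ccontr)
    assume nI: "\<not> I \<le> 0"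
    define e where "e = min \<epsilon>0 (I / (2 * (CE * T + 1)))"
    have epos: "0 < e" unfolding e_def using e0pos nI CET by auto
    have ee0: "e \<le> \<epsilon>0" unfolding e_def by simp
    have "e * (CE * T) \<le> I / (2 * (CE * T + 1)) * (CE * T)" unfolding e_def using CET by (intro mult_right_mono) auto
    also have "\<dots> = I * (CE * T / (2 * (CE * T + 1)))" by simp
    also have "\<dots> < I * 1"
    proof (rule mult_strict_left_mono)
      show "CE * T / (2 * (CE * T + 1)) < 1" using CET by (simp add: field_simps)
    qed (use nI in auto)
    finally show False using key[OF epos ee0] by simp
  qed
  then show ?thesis unfolding I_def w1_def w2_def .
qed

end

lemma proj_ineq:
  fixes x e c :: real
  assumes "0 \<le> e" "e \<le> c"
  shows "(min c (max 0 x) - e)^2 \<le> (x - e) * (min c (max 0 x) - e)"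
proof (cases "x \<le> 0")
  case True
  then have "min c (max 0 x) = 0" using assms by auto
  moreover have "0 \<le> (- x) * e" using True assms by (intro mult_nonneg_nonneg) auto
  ultimately show ?thesis by (simp add: power2_eq_square algebra_simps)
next
  case False
  show ?thesis
  proof (cases "c \<le> x")
    case True
    then have p: "min c (max 0 x) = c" using False by auto
    have "0 \<le> (c - e) * (x - c)" using True assms by simp
    then show ?thesis unfolding p by (simp add: power2_eq_square algebra_simps)
  next
    case False2: False
    then have "min c (max 0 x) = x" using False by auto
    then show ?thesis by (simp add: power2_eq_square)
  qed
qed

lemma ae_from_integral:
  fixes q :: "real \<Rightarrow> real"
  assumes q: "q integrable_on {0..T}" and nn: "\<And>s. s \<in> {0..T} \<Longrightarrow> 0 \<le> q s" and le: "integral {0..T} q \<le> 0"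
  shows "AE t in lborel. t \<in> {0..T} \<longrightarrow> q t = 0"
proof -
  have z: "integral {0..T} q = 0" using le integral_nonneg[OF q nn] by linarith
  have af: "q absolutely_integrable_on {0..T}" using nn
    by (intro absolutely_integrable_onI q integrable_eq[OF q]) simp
  then have "integral {0..T} q = set_lebesgue_integral lebesgue {0..T} q"
    by (intro set_lebesgue_integral_eq_integral(2)[symmetric])
  then have i0: "(LINT x|lebesgue. indicator {0..T} x *\<^sub>R q x) = 0" using z unfolding set_lebesgue_integral_def by simp
  have int: "integrable lebesgue (\<lambda>x. indicat_real {0..T} x *\<^sub>R q x)" by (metis af set_integrable_def)
  have "AE x in lebesgue. 0 \<le> indicat_real {0..T} x *\<^sub>R q x" using nn by (intro AE_I2) (auto simp: indicator_def)
  then have "AE x in lebesgue. indicat_real {0..T} x *\<^sub>R q x = 0" using integral_nonneg_eq_0_iff_AE[OF int] i0 by simp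
  then have "AE x in lebesgue. x \<in> {0..T} \<longrightarrow> q x = 0" by eventually_elim (auto simp: indicator_def)
  then show ?thesis by (simp add: AE_completion_iff)
qed

context oc begin

lemma VI:
  fixes v1 v2 :: "real \<Rightarrow> real" and a :: real
  assumes a: "0 < a"
    and mv1: "v1 \<in> borel_measurable (lebesgue_on {0..T})" and mv2: "v2 \<in> borel_measurable (lebesgue_on {0..T})"
    and vb: "\<And>s. s \<in> {0..T} \<Longrightarrow> a \<le> v1 s \<and> v1 s \<le> 1 - a \<and> a \<le> v2 s \<and> v2 s \<le> \<delta> - a"
  shows "integral {0..T} (\<lambda>s. (- f s * l1 s - \<eta>1 s) * (v1 s - \<eta>1 s) + (m s * l2 s - \<eta>2 s) * (v2 s - \<eta>2 s)) \<le> 0"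
proof -
  define w1 where "w1 s = v1 s - \<eta>1 s" for s
  define w2 where "w2 s = v2 s - \<eta>2 s" for s
  have mw1: "w1 \<in> borel_measurable (lebesgue_on {0..T})" unfolding w1_def[abs_def] using mv1 meas_eta1 by (rule borel_measurable_diff)
  have mw2: "w2 \<in> borel_measurable (lebesgue_on {0..T})" unfolding w2_def[abs_def] using mv2 meas_eta2 by (rule borel_measurable_diff)
  have wb: "\<bar>w1 s\<bar> \<le> 1 \<and> \<bar>w2 s\<bar> \<le> 1" if "s \<in> {0..T}" for s
    using vb[OF that] eta[OF that] dpos a unfolding w1_def w2_def by auto
  have bw1: "BM T w1" by (rule BM_meas[OF mw1, of 1]) (use wb in auto)
  have bw2: "BM T w2" by (rule BM_meas[OF mw2, of 1]) (use wb in auto)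
  define b1 where "b1 s = - (f s * w1 s)" for s
  define b2 where "b2 s = m s * w2 s" for s
  have bb1: "BM T b1" unfolding b1_def[abs_def] by (intro BM_minus BM_mult BM_basic bw1)
  have bb2: "BM T b2" unfolding b2_def[abs_def] by (intro BM_mult BM_basic bw2)
  obtain MA where MA: "MA > 0" "\<forall>s\<in>{0..T}. \<bar>A11 s\<bar> \<le> MA \<and> \<bar>A12 s\<bar> \<le> MA \<and> \<bar>A21 s\<bar> \<le> MA \<and> \<bar>A22 s\<bar> \<le> MA"
    using bound_A by blast
  obtain Mb where Mb: "b1 \<in> borel_measurable (lebesgue_on {0..T})" "b2 \<in> borel_measurable (lebesgue_on {0..T})"
    "\<forall>s\<in>{0..T}. \<bar>b1 s\<bar> \<le> Mb \<and> \<bar>b2 s\<bar> \<le> Mb" using BM_bounds[OF bb1 bb2] by blast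
  define M where "M = MA + \<bar>Mb\<bar>"
  have M: "0 < M" unfolding M_def using MA by simp
  have bnd: "\<bar>A11 s\<bar> \<le> M \<and> \<bar>A12 s\<bar> \<le> M \<and> \<bar>A21 s\<bar> \<le> M \<and> \<bar>A22 s\<bar> \<le> M \<and> \<bar>b1 s\<bar> \<le> M \<and> \<bar>b2 s\<bar> \<le> M"
    if "s \<in> {0..T}" for s
    using MA(2) Mb(3) that unfolding M_def by fastforce
  obtain \<phi> \<psi> where c\<phi>: "continuous_on {0..T} \<phi>" and c\<psi>: "continuous_on {0..T} \<psi>"
    and hh: "\<forall>t\<in>{0..T}. ((\<lambda>s. A11 s * \<phi> s + A12 s * \<psi> s + b1 s) has_integral \<phi> t) {0..t} \<and>
                  ((\<lambda>s. A21 s * \<phi> s + A22 s * \<psi> s + b2 s) has_integral \<psi> t) {0..t}"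
  proof (atomize_elim, rule picard2[OF _ M bnd])
    show "0 \<le> T" using Tpos by simp
    fix x y :: "real \<Rightarrow> real" assume cx: "continuous_on {0..T} x" and cy: "continuous_on {0..T} y"
    show "(\<lambda>s. A11 s * x s + A12 s * y s + b1 s) integrable_on {0..T} \<and> (\<lambda>s. A21 s * x s + A22 s * y s + b2 s) integrable_on {0..T}"
    proof
      show "(\<lambda>s. A11 s * x s + A12 s * y s + b1 s) integrable_on {0..T}"
        by (rule lin_integrable[OF meas_A(1) meas_A(2) Mb(1) _ cx cy]) (use bnd in auto)
      show "(\<lambda>s. A21 s * x s + A22 s * y s + b2 s) integrable_on {0..T}"
        by (rule lin_integrable[OF meas_A(3) meas_A(4) Mb(2) _ cx cy]) (use bnd in auto)
    qed
  qed
  have h\<phi>: "\<And>t. t \<in> {0..T} \<Longrightarrow> ((\<lambda>s. A11 s * \<phi> s + A12 s * \<psi> s + b1 s) has_integral \<phi> t) {0..t}" using hh by blast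
  have h\<psi>: "\<And>t. t \<in> {0..T} \<Longrightarrow> ((\<lambda>s. A21 s * \<phi> s + A22 s * \<psi> s + b2 s) has_integral \<psi> t) {0..t}" using hh by blast
  have P: "integral {0..T} (\<lambda>s. - (\<phi> s + \<psi> s) - \<eta>1 s * (v1 s - \<eta>1 s) - \<eta>2 s * (v2 s - \<eta>2 s)) \<le> 0"
  proof (rule perturb[OF a mv1 mv2 vb c\<phi> c\<psi>])
    show "\<And>t. t \<in> {0..T} \<Longrightarrow> ((\<lambda>s. A11 s * \<phi> s + A12 s * \<psi> s + - (f s * (v1 s - \<eta>1 s))) has_integral \<phi> t) {0..t}"
      using h\<phi> unfolding b1_def w1_def .
    show "\<And>t. t \<in> {0..T} \<Longrightarrow> ((\<lambda>s. A21 s * \<phi> s + A22 s * \<psi> s + m s * (v2 s - \<eta>2 s)) has_integral \<psi> t) {0..t}"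
      using h\<psi> unfolding b2_def w2_def .
  qed auto
  have D: "integral {0..T} (\<lambda>s. \<phi> s + \<psi> s) = - integral {0..T} (\<lambda>s. l1 s * b1 s + l2 s * b2 s)"
    by (rule duality[OF c\<phi> c\<psi> bb1 bb2 h\<phi> h\<psi>])
  note BB = BM_basic BM_cont[OF c\<phi>] BM_cont[OF c\<psi>] bw1 bw2 bb1 bb2
  have i1: "(\<lambda>s. - (\<phi> s + \<psi> s) - \<eta>1 s * w1 s - \<eta>2 s * w2 s) integrable_on {0..T}"
    by (intro BM_integrable BM_diff BM_minus BM_add BM_mult BB)
  have i2: "(\<lambda>s. \<phi> s + \<psi> s) integrable_on {0..T}" by (intro BM_integrable BM_add BB)
  have i3: "(\<lambda>s. l1 s * b1 s + l2 s * b2 s) integrable_on {0..T}" by (intro BM_integrable BM_add BM_mult BB)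
  have pw: "(- f s * l1 s - \<eta>1 s) * (v1 s - \<eta>1 s) + (m s * l2 s - \<eta>2 s) * (v2 s - \<eta>2 s)
      = ((- (\<phi> s + \<psi> s) - \<eta>1 s * w1 s - \<eta>2 s * w2 s) + (\<phi> s + \<psi> s)) + (l1 s * b1 s + l2 s * b2 s)" for s
    unfolding w1_def w2_def b1_def b2_def by (simp add: algebra_simps)
  have "integral {0..T} (\<lambda>s. (- f s * l1 s - \<eta>1 s) * (v1 s - \<eta>1 s) + (m s * l2 s - \<eta>2 s) * (v2 s - \<eta>2 s))
      = integral {0..T} (\<lambda>s. - (\<phi> s + \<psi> s) - \<eta>1 s * w1 s - \<eta>2 s * w2 s) + integral {0..T} (\<lambda>s. \<phi> s + \<psi> s)
        + integral {0..T} (\<lambda>s. l1 s * b1 s + l2 s * b2 s)"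
    unfolding pw integral_add[OF integrable_add[OF i1 i2] i3] integral_add[OF i1 i2] ..
  also have "\<dots> \<le> 0" using P D unfolding w1_def w2_def by linarith
  finally show ?thesis .
qed

lemma final: "AE t in lborel. t \<in> {0..T} \<longrightarrow> \<eta>1 t = min 1 (max 0 (- f t * l1 t)) \<and> \<eta>2 t = min 1 (max 0 (m t * l2 t))"
proof -
  define P1 where "P1 s = min 1 (max 0 (- f s * l1 s))" for s
  define P2 where "P2 s = min \<delta> (max 0 (m s * l2 s))" for s
  have mP1: "P1 \<in> borel_measurable (lebesgue_on {0..T})" unfolding P1_def[abs_def]
    by (intro borel_measurable_min borel_measurable_max borel_measurable_times borel_measurable_uminus borel_measurable_const
        meas_f continuous_imp_measurable_on_sets_lebesgue[OF l_cont(1)]) auto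
  have mP2: "P2 \<in> borel_measurable (lebesgue_on {0..T})" unfolding P2_def[abs_def]
    by (intro borel_measurable_min borel_measurable_max borel_measurable_times borel_measurable_const
        meas_m continuous_imp_measurable_on_sets_lebesgue[OF l_cont(2)]) auto
  have P1b: "0 \<le> P1 s \<and> P1 s \<le> 1" for s unfolding P1_def by auto
  have P2b: "0 \<le> P2 s \<and> P2 s \<le> \<delta>" for s unfolding P2_def using dpos by auto
  have bP1: "BM T P1" by (rule BM_meas[OF mP1, of 1]) (use P1b in auto)
  have bP2: "BM T P2" by (rule BM_meas[OF mP2, of \<delta>]) (metis P2b abs_of_nonneg)
  define G1 where "G1 s = - f s * l1 s - \<eta>1 s" for s
  define G2 where "G2 s = m s * l2 s - \<eta>2 s" for s
  have bG1: "BM T G1" unfolding G1_def[abs_def] mult_minus_left by (intro BM_diff BM_minus BM_mult BM_basic)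
  have bG2: "BM T G2" unfolding G2_def[abs_def] by (intro BM_diff BM_mult BM_basic)
  define Z where "Z s = G1 s * (P1 s - \<eta>1 s) + G2 s * (P2 s - \<eta>2 s)" for s
  define D where "D s = G1 s * (1 - 2 * P1 s) + G2 s * (1 - 2 * P2 s * (1 / \<delta>))" for s
  note BB = BM_basic bP1 bP2 bG1 bG2
  have iZ: "Z integrable_on {0..T}" unfolding Z_def[abs_def] by (intro BM_integrable BM_add BM_mult BM_diff BB)
  have iD: "D integrable_on {0..T}" unfolding D_def[abs_def] by (intro BM_integrable BM_add BM_mult BM_diff BM_const BB)
  have ineq: "integral {0..T} Z + a * integral {0..T} D \<le> 0" if a: "0 < a" "a \<le> \<delta> / 2" for a
  proof -
    define v1 where "v1 s = a + (1 - 2 * a) * P1 s" for s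
    define v2 where "v2 s = a + (1 - 2 * a / \<delta>) * P2 s" for s
    have mv1: "v1 \<in> borel_measurable (lebesgue_on {0..T})" unfolding v1_def[abs_def]
      by (intro borel_measurable_add borel_measurable_times borel_measurable_const mP1)
    have mv2: "v2 \<in> borel_measurable (lebesgue_on {0..T})" unfolding v2_def[abs_def]
      by (intro borel_measurable_add borel_measurable_times borel_measurable_const mP2)
    have a1: "0 \<le> 1 - 2 * a" using a dpos by simp
    have a2: "0 \<le> 1 - 2 * a / \<delta>" using a dpos by (simp add: field_simps)
    have vb: "a \<le> v1 s \<and> v1 s \<le> 1 - a \<and> a \<le> v2 s \<and> v2 s \<le> \<delta> - a" for s
    proof -
      have x1: "0 \<le> (1 - 2 * a) * P1 s" using a1 P1b[of s] by simp
      have x2: "(1 - 2 * a) * P1 s \<le> (1 - 2 * a) * 1" by (rule mult_left_mono) (use a1 P1b[of s] in auto)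
      have x3: "0 \<le> (1 - 2 * a / \<delta>) * P2 s" using a2 P2b[of s] by simp
      have x4: "(1 - 2 * a / \<delta>) * P2 s \<le> (1 - 2 * a / \<delta>) * \<delta>" by (rule mult_left_mono) (use a2 P2b[of s] in auto)
      have x5: "(1 - 2 * a / \<delta>) * \<delta> = \<delta> - 2 * a" using dpos by (simp add: field_simps)
      have gen: "\<And>X Y. 0 \<le> X \<Longrightarrow> X \<le> 1 - 2*a \<Longrightarrow> 0 \<le> Y \<Longrightarrow> Y \<le> \<delta> - 2*a \<Longrightarrow>
          a \<le> a + X \<and> a + X \<le> 1 - a \<and> a \<le> a + Y \<and> a + Y \<le> \<delta> - a" by auto
      have x2': "(1 - 2 * a) * P1 s \<le> 1 - 2 * a" using x2 by simp
      have x4': "(1 - 2 * a / \<delta>) * P2 s \<le> \<delta> - 2 * a" using x4 x5 by simp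
      show ?thesis unfolding v1_def v2_def by (rule gen[OF x1 x2' x3 x4'])
    qed
    have "integral {0..T} (\<lambda>s. (- f s * l1 s - \<eta>1 s) * (v1 s - \<eta>1 s) + (m s * l2 s - \<eta>2 s) * (v2 s - \<eta>2 s)) \<le> 0"
      by (rule VI[OF a(1) mv1 mv2 vb])
    moreover have "(- f s * l1 s - \<eta>1 s) * (v1 s - \<eta>1 s) + (m s * l2 s - \<eta>2 s) * (v2 s - \<eta>2 s) = Z s + a * D s" for s
      unfolding v1_def v2_def Z_def D_def G1_def G2_def using dpos by (simp add: field_simps)
    ultimately have "integral {0..T} (\<lambda>s. Z s + a * D s) \<le> 0" by simp
    moreover have "integral {0..T} (\<lambda>s. Z s + a * D s) = integral {0..T} Z + a * integral {0..T} D"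
      using integral_add[OF iZ has_integral_integrable[OF has_integral_mult_right[OF integrable_integral[OF iD]]]] by simp
    ultimately show ?thesis by simp
  qed
  have Z0: "integral {0..T} Z \<le> 0"
  proof (rule ccontr)
    assume nZ: "\<not> integral {0..T} Z \<le> 0"
    define iz where "iz = integral {0..T} Z"
    define id where "id = integral {0..T} D"
    define a where "a = min (\<delta> / 2) (iz / (2 * (\<bar>id\<bar> + 1)))"
    have apos: "0 < a" unfolding a_def iz_def using nZ dpos by auto
    have ale: "a \<le> \<delta> / 2" unfolding a_def by (rule min.cobounded1)
    have "a * \<bar>id\<bar> \<le> iz / (2 * (\<bar>id\<bar> + 1)) * \<bar>id\<bar>" unfolding a_def by (intro mult_right_mono) auto
    also have "\<dots> \<le> iz / 2" using nZ unfolding iz_def by (simp add: field_simps)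
    finally have "a * \<bar>id\<bar> \<le> iz / 2" .
    moreover have "- (a * \<bar>id\<bar>) \<le> a * id"
    proof -
      have "a * (- \<bar>id\<bar>) \<le> a * id" by (rule mult_left_mono) (use apos in auto)
      then show ?thesis by simp
    qed
    ultimately have "0 < iz + a * id" using nZ unfolding iz_def by linarith
    then show False using ineq[OF apos ale] unfolding iz_def id_def by linarith
  qed
  define q where "q s = (P1 s - \<eta>1 s)^2 + (P2 s - \<eta>2 s)^2" for s
  have iq: "q integrable_on {0..T}" unfolding q_def[abs_def] power2_eq_square
    by (intro BM_integrable BM_add BM_mult BM_diff BB)
  have qZ: "q s \<le> Z s" if s: "s \<in> {0..T}" for s
  proof -
    have "(P1 s - \<eta>1 s)^2 \<le> G1 s * (P1 s - \<eta>1 s)"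
      unfolding P1_def G1_def using proj_ineq[of "\<eta>1 s" 1 "- f s * l1 s"] eta[OF s] by simp
    moreover have "(P2 s - \<eta>2 s)^2 \<le> G2 s * (P2 s - \<eta>2 s)"
      unfolding P2_def G2_def using proj_ineq[of "\<eta>2 s" \<delta> "m s * l2 s"] eta[OF s] by simp
    ultimately show ?thesis unfolding q_def Z_def by linarith
  qed
  have "integral {0..T} q \<le> integral {0..T} Z" by (rule integral_le[OF iq iZ qZ])
  then have "integral {0..T} q \<le> 0" using Z0 by linarith
  then have ae: "AE t in lborel. t \<in> {0..T} \<longrightarrow> q t = 0"
    by (intro ae_from_integral[OF iq]) (simp_all add: q_def)
  show ?thesis using ae
  proof eventually_elim
    case (elim t)
    show ?case
    proof
      assume t: "t \<in> {0..T}"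
      then have "q t = 0" using elim by blast
      then have e1: "\<eta>1 t = P1 t" and e2: "\<eta>2 t = P2 t" unfolding q_def by (simp_all add: sum_power2_eq_zero_iff)
      have "P2 t < \<delta>" using e2 eta[OF t] by simp
      then have "P2 t = max 0 (m t * l2 t)" unfolding P2_def by auto
      moreover have "max 0 (m t * l2 t) < 1" using \<open>P2 t < \<delta>\<close> calculation dpos by linarith
      ultimately have "P2 t = min 1 (max 0 (m t * l2 t))" by simp
      then show "\<eta>1 t = min 1 (max 0 (- f t * l1 t)) \<and> \<eta>2 t = min 1 (max 0 (m t * l2 t))"
        using e1 e2 unfolding P1_def by simp
    qed
  qed
qed

end

theorem mainTheorem6:
  fixes \<beta> \<delta> K T f0 m0 :: real
    and \<eta>1 \<eta>2 f m :: "real \<Rightarrow> real"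
  assumes "0 < \<beta>" "\<beta> < 1" "0 < \<delta>" "\<delta> < 1" "0 < K" "0 < T"
    and "0 < f0" "0 < m0"
    and adm: "admissible1 \<delta> T \<eta>1 \<eta>2"
    and st: "is_state1 \<beta> \<delta> K T f0 m0 \<eta>1 \<eta>2 f m"
    and opt: "\<forall>u1 u2 g h. admissible1 \<delta> T u1 u2 \<and> is_state1 \<beta> \<delta> K T f0 m0 u1 u2 g h
                 \<longrightarrow> J1 T u1 u2 g h \<le> J1 T \<eta>1 \<eta>2 f m"
  shows "\<exists>p1 p2. is_adjoint1 \<beta> \<delta> K T \<eta>1 \<eta>2 f m p1 p2 \<and>
           (AE t in lborel. t \<in> {0..T} \<longrightarrow>
              \<eta>1 t = min 1 (max 0 (- f t * p1 t)) \<and>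
              \<eta>2 t = min 1 (max 0 (m t * p2 t)))"
proof -
  interpret oc \<beta> \<delta> K T f0 m0 \<eta>1 \<eta>2 f m
    using assms by unfold_locales
  show ?thesis using is_adj final by blast
qed

end
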